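(* Let $U\subseteq L_{\mathrm{up}}$ be a set of up-links such that the sets $P_u$, $u\in U$, are pairwise disjoint, and let $(C,A)$ be a (weakly) connected component of the dependency graph of $U$ (which is an arborescence). Let $\ell\in C$ and let $H_\ell$ be the arc set of the directed path in $(C,A)$ from the root of $(C,A)$ to $\ell$. Then $$\bigl|\{\bar\ell\in C\setminus\{\ell\}\colon \mathrm{apex}(\ell)\in V_{\bar\ell}\}\bigr|\ \le\ \bigl|\{u\in U\colon H_\ell\cap A_u\neq\emptyset\}\bigr|.$$
   Context: Let $(G=(V,E),L,w)$ be a WTAP instance (spanning tree $G$, links $L\subseteq\binom V2$, weights $w>0$) with a fixed root $r\in V$, and let $F\subseteq L$ be a WTAP solution, i.e. $\bigcup_{\ell\in F}P_\ell=E$, where $P_\ell$ is the edge set of the tree path between the endpoints of $\ell$ and $V_\ell$ its vertex set. Ancestors of $v$ are the vertices on the $r$-$v$ path in $G$ (including $r$ and $v$); descendants are defined reciprocally. $\mathrm{apex}(\ell)$ is the vertex of $V_\ell$ closest to $r$. An up-link is a link $\{t,b\}$ with $t$ an ancestor of $b$; $L_{\mathrm{up}}$ is the set of up-links. For $v\in V$ let $B_v=\{\ell\in F\colon\mathrm{apex}(\ell)\text{ is a descendant of }v\}$. For an up-link $u=\{t,b\}$ with $t$ an ancestor of $b$, let $v_u$ be the ancestor of $t$ farthest from $r$ such that $P_u\subseteq\bigcup_{\ell\in B_{v_u}}P_\ell$, and fix $F_u\subseteq B_{v_u}$ inclusion-wise minimal with $P_u\subseteq\bigcup_{\ell\in F_u}P_\ell$.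 For $\ell\in F_u$ let $P_{u,\ell}=P_u\setminus\bigcup_{\bar\ell\in F_u\setminus\{\ell\}}P_{\bar\ell}$; these sets are nonempty, pairwise disjoint, and each is the edge set of a path. Define $\ell_1\prec_u\ell_2$ iff the edges of $P_{u,\ell_1}$ appear before those of $P_{u,\ell_2}$ on the $t$-$b$ path in $G$. If $\ell_1\prec_u\cdots\prec_u\ell_q$ are the links of $F_u$, let $A_u=\{(\ell_i,\ell_{i+1})\colon i=1,\dots,q-1\}$. The dependency graph of $U\subseteq L_{\mathrm{up}}$ is the directed graph with vertex set $F$ whose arc set is the disjoint union of the $A_u$, $u\in U$. When the $P_u$, $u\in U$, are pairwise disjoint, this graph is a branching (no directed cycles, in-degrees at most one), so each weakly connected component is an arborescence. *)

theory Defs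
  imports Complex_Main
begin

(* Graphs: vertices of type 'v, edges and links are 2-element vertex sets. *)

definition is_path :: "'v set set \<Rightarrow> 'v list \<Rightarrow> bool" where
  "is_path E xs \<longleftrightarrow> xs \<noteq> [] \<and> distinct xs \<and>
     (\<forall>i. Suc i < length xs \<longrightarrow> {xs ! i, xs ! Suc i} \<in> E)"

definition is_tree :: "'v set \<Rightarrow> 'v set set \<Rightarrow> bool" where
  "is_tree V E \<longleftrightarrow> finite V \<and> V \<noteq> {} \<and>
     E \<subseteq> {{a, b} | a b. a \<in> V \<and> b \<in> V \<and> a \<noteq> b} \<and>
     (\<forall>a\<in>V. \<forall>b\<in>V. \<exists>!xs. is_path E xs \<and> hd xs = a \<and> last xs = b)"

definition tree_path :: "'v set set \<Rightarrow> 'v \<Rightarrow> 'v \<Rightarrow> 'v list" where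
  "tree_path E a b = (THE xs. is_path E xs \<and> hd xs = a \<and> last xs = b)"

definition path_edges :: "'v list \<Rightarrow> 'v set set" where
  "path_edges xs = {{xs ! i, xs ! Suc i} | i. Suc i < length xs}"

definition Pl :: "'v set set \<Rightarrow> 'v set \<Rightarrow> 'v set set" where
  "Pl E l = (\<Union>a\<in>l. \<Union>b\<in>l - {a}. path_edges (tree_path E a b))"

definition Vl :: "'v set set \<Rightarrow> 'v set \<Rightarrow> 'v set" where
  "Vl E l = (\<Union>a\<in>l. \<Union>b\<in>l - {a}. set (tree_path E a b))"

definition ancestor :: "'v set set \<Rightarrow> 'v \<Rightarrow> 'v \<Rightarrow> 'v \<Rightarrow> bool" where
  "ancestor E r x v \<longleftrightarrow> x \<in> set (tree_path E r v)"

definition depth :: "'v set set \<Rightarrow> 'v \<Rightarrow> 'v \<Rightarrow> nat" where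
  "depth E r x = length (tree_path E r x)"

definition apex :: "'v set set \<Rightarrow> 'v \<Rightarrow> 'v set \<Rightarrow> 'v" where
  "apex E r l = (ARG_MIN (depth E r) x. x \<in> Vl E l)"

definition is_up_link :: "'v set set \<Rightarrow> 'v \<Rightarrow> 'v set \<Rightarrow> bool" where
  "is_up_link E r u \<longleftrightarrow> (\<exists>t b. u = {t, b} \<and> t \<noteq> b \<and> ancestor E r t b)"

definition L_up :: "'v set set \<Rightarrow> 'v \<Rightarrow> 'v set set \<Rightarrow> 'v set set" where
  "L_up E r L = {u \<in> L. is_up_link E r u}"

definition up_top :: "'v set set \<Rightarrow> 'v \<Rightarrow> 'v set \<Rightarrow> 'v" where
  "up_top E r u = (THE t. \<exists>b. u = {t, b} \<and> t \<noteq> b \<and> ancestor E r t b)"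

definition up_bot :: "'v set set \<Rightarrow> 'v \<Rightarrow> 'v set \<Rightarrow> 'v" where
  "up_bot E r u = (THE b. \<exists>t. u = {t, b} \<and> t \<noteq> b \<and> ancestor E r t b)"

definition Bset :: "'v set set \<Rightarrow> 'v \<Rightarrow> 'v set set \<Rightarrow> 'v \<Rightarrow> 'v set set" where
  "Bset E r F v = {l \<in> F. ancestor E r v (apex E r l)}"

definition v_of :: "'v set set \<Rightarrow> 'v \<Rightarrow> 'v set set \<Rightarrow> 'v set \<Rightarrow> 'v" where
  "v_of E r F u = (ARG_MAX (depth E r) v.
      ancestor E r v (up_top E r u) \<and> Pl E u \<subseteq> (\<Union>l\<in>Bset E r F v. Pl E l))"

definition Fu_ok :: "'v set set \<Rightarrow> 'v \<Rightarrow> 'v set set \<Rightarrow> 'v set \<Rightarrow> 'v set set \<Rightarrow> bool" where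
  "Fu_ok E r F u S \<longleftrightarrow> S \<subseteq> Bset E r F (v_of E r F u) \<and>
     Pl E u \<subseteq> (\<Union>l\<in>S. Pl E l) \<and>
     (\<forall>S'. S' \<subset> S \<longrightarrow> \<not> Pl E u \<subseteq> (\<Union>l\<in>S'. Pl E l))"

definition Pul :: "'v set set \<Rightarrow> 'v set \<Rightarrow> 'v set set \<Rightarrow> 'v set \<Rightarrow> 'v set set" where
  "Pul E u S l = Pl E u - (\<Union>l'\<in>S - {l}. Pl E l')"

definition prec_u :: "'v set set \<Rightarrow> 'v \<Rightarrow> 'v set \<Rightarrow> 'v set set \<Rightarrow> 'v set \<Rightarrow> 'v set \<Rightarrow> bool" where
  "prec_u E r u S l1 l2 \<longleftrightarrow>
     (let xs = tree_path E (up_top E r u) (up_bot E r u) in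
      \<forall>i j. Suc i < length xs \<and> Suc j < length xs \<and>
            {xs ! i, xs ! Suc i} \<in> Pul E u S l1 \<and> {xs ! j, xs ! Suc j} \<in> Pul E u S l2
            \<longrightarrow> i < j)"

definition A_u :: "'v set set \<Rightarrow> 'v \<Rightarrow> 'v set \<Rightarrow> 'v set set \<Rightarrow> ('v set \<times> 'v set) set" where
  "A_u E r u S = {(l1, l2). l1 \<in> S \<and> l2 \<in> S \<and> l1 \<noteq> l2 \<and> prec_u E r u S l1 l2 \<and>
       \<not> (\<exists>l3\<in>S. l3 \<noteq> l1 \<and> l3 \<noteq> l2 \<and> prec_u E r u S l1 l3 \<and> prec_u E r u S l3 l2)}"

(* arcs of the dependency graph of U (vertex set F): disjoint union of the A_u,
   realised by tagging each arc with its up-link u: (u, l1, l2) *)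
definition dep_arcs :: "'v set set \<Rightarrow> 'v \<Rightarrow> ('v set \<Rightarrow> 'v set set) \<Rightarrow> 'v set set
     \<Rightarrow> ('v set \<times> 'v set \<times> 'v set) set" where
  "dep_arcs E r Fu U = {(u, l1, l2) | u l1 l2. u \<in> U \<and> (l1, l2) \<in> A_u E r u (Fu u)}"

definition arc_tail :: "'a \<times> 'b \<times> 'b \<Rightarrow> 'b" where "arc_tail a = fst (snd a)"
definition arc_head :: "'a \<times> 'b \<times> 'b \<Rightarrow> 'b" where "arc_head a = snd (snd a)"

definition weak_component :: "'b set \<Rightarrow> ('a \<times> 'b \<times> 'b) set \<Rightarrow> 'b set \<Rightarrow> bool" where
  "weak_component F Arcs C \<longleftrightarrow> (\<exists>x\<in>F. C = {y. (x, y) \<in>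
      ({(arc_tail a, arc_head a) | a. a \<in> Arcs} \<union> {(arc_head a, arc_tail a) | a. a \<in> Arcs})\<^sup>*})"

definition comp_arcs :: "('a \<times> 'b \<times> 'b) set \<Rightarrow> 'b set \<Rightarrow> ('a \<times> 'b \<times> 'b) set" where
  "comp_arcs Arcs C = {a \<in> Arcs. arc_tail a \<in> C \<and> arc_head a \<in> C}"

definition is_root :: "'b set \<Rightarrow> ('a \<times> 'b \<times> 'b) set \<Rightarrow> 'b \<Rightarrow> bool" where
  "is_root C A x \<longleftrightarrow> x \<in> C \<and> (\<forall>a\<in>A. arc_head a \<noteq> x)"

definition dir_path :: "('a \<times> 'b \<times> 'b) set \<Rightarrow> 'b \<Rightarrow> 'b \<Rightarrow> ('a \<times> 'b \<times> 'b) list \<Rightarrow> bool" where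
  "dir_path A x y as \<longleftrightarrow> set as \<subseteq> A \<and> distinct (x # map arc_head as) \<and>
     (if as = [] then x = y
      else arc_tail (hd as) = x \<and> arc_head (last as) = y \<and>
           (\<forall>i. Suc i < length as \<longrightarrow> arc_head (as ! i) = arc_tail (as ! Suc i)))"

end

theory Submission
  imports Defs
begin


lemma is_path_single[simp]: "is_path E [a]"
  by (simp add: is_path_def)

lemma is_path_append1: "is_path E (xs @ ys) \<Longrightarrow> xs \<noteq> [] \<Longrightarrow> is_path E xs"
proof -
  assume a: "is_path E (xs @ ys)" "xs \<noteq> []"
  show ?thesis unfolding is_path_def
  proof (intro conjI allI impI)
    fix i assume i: "Suc i < length xs"
    with a(1) have "{(xs@ys) ! i, (xs@ys) ! Suc i} \<in> E"
      unfolding is_path_def by auto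
    then show "{xs ! i, xs ! Suc i} \<in> E" using i by (simp add: nth_append)
  qed (use a in \<open>auto simp: is_path_def\<close>)
qed

lemma is_path_append2: "is_path E (xs @ ys) \<Longrightarrow> ys \<noteq> [] \<Longrightarrow> is_path E ys"
proof -
  assume a: "is_path E (xs @ ys)" "ys \<noteq> []"
  show ?thesis unfolding is_path_def
  proof (intro conjI allI impI)
    fix i assume i: "Suc i < length ys"
    then have "Suc (length xs + i) < length (xs @ ys)" by simp
    with a(1) have "{(xs@ys) ! (length xs + i), (xs@ys) ! Suc (length xs + i)} \<in> E"
      unfolding is_path_def by blast
    moreover have "(xs@ys) ! (length xs + i) = ys ! i" by (rule nth_append_length_plus)
    moreover have "(xs@ys) ! Suc (length xs + i) = ys ! Suc i"
      using nth_append_length_plus[of xs ys "Suc i"] by simp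
    ultimately show "{ys ! i, ys ! Suc i} \<in> E" by simp
  qed (use a in \<open>auto simp: is_path_def\<close>)
qed

lemma is_path_take: "is_path E xs \<Longrightarrow> 0 < k \<Longrightarrow> is_path E (take k xs)"
  by (metis append_take_drop_id is_path_append1 is_path_def take_eq_Nil neq0_conv)

lemma is_path_drop: "is_path E xs \<Longrightarrow> k < length xs \<Longrightarrow> is_path E (drop k xs)"
  by (metis append_take_drop_id is_path_append2 drop_eq_Nil not_le)

lemma is_path_rev: "is_path E xs \<Longrightarrow> is_path E (rev xs)"
  unfolding is_path_def
proof (intro conjI allI impI)
  fix i assume a: "xs \<noteq> [] \<and> distinct xs \<and> (\<forall>i. Suc i < length xs \<longrightarrow> {xs ! i, xs ! Suc i} \<in> E)"
    and i: "Suc i < length (rev xs)"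
  define j where "j = length xs - Suc (Suc i)"
  have j: "Suc j < length xs" using i by (simp add: j_def)
  have "{xs ! j, xs ! Suc j} \<in> E" using a j by auto
  moreover have "rev xs ! i = xs ! Suc j" "rev xs ! Suc i = xs ! j"
    using i by (auto simp: rev_nth j_def Suc_diff_Suc)
  ultimately show "{rev xs ! i, rev xs ! Suc i} \<in> E" by (simp add: insert_commute)
qed auto

lemma is_path_snoc:
  assumes "is_path E xs" "y \<notin> set xs" "{last xs, y} \<in> E"
  shows "is_path E (xs @ [y])"
  unfolding is_path_def
proof (intro conjI allI impI)
  fix i assume i: "Suc i < length (xs @ [y])"
  show "{(xs @ [y]) ! i, (xs @ [y]) ! Suc i} \<in> E"
  proof (cases "Suc i < length xs")
    case True then show ?thesis using assms(1) by (simp add: nth_append is_path_def)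
  next
    case False
    then have "Suc i = length xs" using i by simp
    have "xs \<noteq> []" using assms(1) by (simp add: is_path_def)
    have "last xs = xs ! i" using \<open>xs \<noteq> []\<close> \<open>Suc i = length xs\<close>
      by (metis diff_Suc_1 last_conv_nth)
    then show ?thesis using assms(3) \<open>Suc i = length xs\<close>
      by (simp add: nth_append)
  qed
qed (use assms in \<open>auto simp: is_path_def\<close>)

lemma path_edges_rev: "path_edges (rev xs) = path_edges xs"
proof -
  have 1: "path_edges (rev xs) \<subseteq> path_edges xs" for xs :: "'a list"
  proof
    fix e assume "e \<in> path_edges (rev xs)"
    then obtain i where i: "Suc i < length xs" "e = {rev xs ! i, rev xs ! Suc i}"
      by (auto simp: path_edges_def)
    define j where "j = length xs - Suc (Suc i)"
    have "rev xs ! i = xs ! Suc j" "rev xs ! Suc i = xs ! j"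
      using i by (auto simp: rev_nth j_def Suc_diff_Suc)
    then have "e = {xs ! j, xs ! Suc j}" using i by auto
    moreover have "Suc j < length xs" using i by (simp add: j_def)
    ultimately show "e \<in> path_edges xs" by (auto simp: path_edges_def)
  qed
  show ?thesis using 1[of xs] 1[of "rev xs"] by simp
qed

locale tree_r =
  fixes V :: "'v set" and E :: "'v set set" and r :: 'v
  assumes tree: "is_tree V E" and rV: "r \<in> V"
begin

abbreviation tp where "tp \<equiv> tree_path E"
abbreviation anc where "anc \<equiv> ancestor E r"
abbreviation dep where "dep \<equiv> depth E r"

lemma finV: "finite V" using tree by (simp add: is_tree_def)

lemma E_sub: "E \<subseteq> {{a, b} | a b. a \<in> V \<and> b \<in> V \<and> a \<noteq> b}"
  using tree by (simp add: is_tree_def)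

lemma edgeE: assumes "e \<in> E" obtains a b where "e = {a,b}" "a \<in> V" "b \<in> V" "a \<noteq> b"
  using assms E_sub by blast

lemma edge_V: "{a, b} \<in> E \<Longrightarrow> a \<in> V \<and> b \<in> V \<and> a \<noteq> b"
  by (metis doubleton_eq_iff edgeE)

lemma tp_ex1: "a \<in> V \<Longrightarrow> b \<in> V \<Longrightarrow> \<exists>!xs. is_path E xs \<and> hd xs = a \<and> last xs = b"
  using tree by (simp add: is_tree_def)

lemma tp_props: assumes "a \<in> V" "b \<in> V"
  shows "is_path E (tp a b)" "hd (tp a b) = a" "last (tp a b) = b"
  using theI'[OF tp_ex1[OF assms]] unfolding tree_path_def by auto

lemma tp_unique: assumes "a \<in> V" "b \<in> V" "is_path E xs" "hd xs = a" "last xs = b"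
  shows "tp a b = xs"
  unfolding tree_path_def using tp_ex1[OF assms(1,2)] assms(3-5)
  by (simp add: the1_equality)

lemma path_V: assumes "is_path E xs" "hd xs \<in> V" shows "set xs \<subseteq> V"
proof
  fix x assume x: "x \<in> set xs"
  then obtain i where i: "i < length xs" "xs ! i = x" by (auto simp: in_set_conv_nth)
  show "x \<in> V"
  proof (cases i)
    case 0 then show ?thesis using i assms by (metis hd_conv_nth is_path_def)
  next
    case (Suc j)
    then have "{xs ! j, xs ! i} \<in> E" using assms i unfolding is_path_def by auto
    then show ?thesis using edge_V i by auto
  qed
qed

lemma tp_ne: "a \<in> V \<Longrightarrow> b \<in> V \<Longrightarrow> tp a b \<noteq> []"
  using tp_props(1) is_path_def by blast

lemma tp_distinct: "a \<in> V \<Longrightarrow> b \<in> V \<Longrightarrow> distinct (tp a b)"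
  using tp_props(1) is_path_def by blast

lemma tp_V: "a \<in> V \<Longrightarrow> b \<in> V \<Longrightarrow> set (tp a b) \<subseteq> V"
  using path_V tp_props by metis

lemma tp_refl: "a \<in> V \<Longrightarrow> tp a a = [a]"
  by (rule tp_unique) auto

lemma tp_rev: "a \<in> V \<Longrightarrow> b \<in> V \<Longrightarrow> tp b a = rev (tp a b)"
  by (rule tp_unique) (auto simp: tp_props is_path_rev tp_ne hd_rev last_rev)

lemma tp_edge: "{a,b} \<in> E \<Longrightarrow> tp a b = [a,b]"
  using edge_V[of a b]
  by (intro tp_unique) (auto simp: is_path_def nth_Cons split: nat.splits)

lemma hd_take_drop: "i < length xs \<Longrightarrow> hd (take (Suc k) (drop i xs)) = xs ! i"
  by (simp add: hd_drop_conv_nth)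

lemma last_take_drop: "i \<le> j \<Longrightarrow> j < length xs \<Longrightarrow> last (take (Suc (j - i)) (drop i xs)) = xs ! j"
proof -
  assume ij: "i \<le> j" "j < length xs"
  have l: "length (take (Suc (j - i)) (drop i xs)) = Suc (j - i)" using ij by simp
  have "last (take (Suc (j - i)) (drop i xs)) = take (Suc (j - i)) (drop i xs) ! (j - i)"
    using l by (metis diff_Suc_1 last_conv_nth list.size(3) nat.distinct(1))
  also have "\<dots> = xs ! j" using ij by simp
  finally show ?thesis .
qed

lemma tp_sub:
  assumes p: "is_path E xs" and V: "hd xs \<in> V" and ij: "i \<le> j" "j < length xs"
  shows "tp (xs ! i) (xs ! j) = take (Suc (j - i)) (drop i xs)"
proof -
  have sV: "set xs \<subseteq> V" using path_V p V by auto
  have il: "i < length xs" using ij by simp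
  have p2: "is_path E (drop i xs)" using is_path_drop p il by blast
  have p3: "is_path E (take (Suc (j - i)) (drop i xs))" using is_path_take p2 by blast
  show ?thesis
    apply (rule tp_unique)
    using sV ij p3 hd_take_drop[OF il] last_take_drop[OF ij] by auto
qed

lemma tp_sub_set:
  assumes p: "is_path E xs" and V: "hd xs \<in> V" and xy: "x \<in> set xs" "y \<in> set xs"
  shows "set (tp x y) \<subseteq> set xs"
proof -
  obtain i j where i: "i < length xs" "xs ! i = x" and j: "j < length xs" "xs ! j = y"
    using xy by (auto simp: in_set_conv_nth)
  have sV: "set xs \<subseteq> V" using path_V p V by auto
  show ?thesis
  proof (cases "i \<le> j")
    case True
    then show ?thesis using tp_sub[OF p V True j(1)] i j
      by (metis set_drop_subset set_take_subset subset_trans)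
  next
    case False
    then have "tp y x = take (Suc (i - j)) (drop j xs)" using tp_sub[OF p V _ i(1), of j] i j by simp
    moreover have "tp x y = rev (tp y x)" using tp_rev sV i j by (metis nth_mem subsetD)
    ultimately show ?thesis
      by (metis set_drop_subset set_rev set_take_subset subset_trans)
  qed
qed

lemma edge_in_path:
  assumes p: "is_path E xs" and V: "hd xs \<in> V" and xy: "x \<in> set xs" "y \<in> set xs"
    and e: "{x,y} \<in> E"
  shows "{x,y} \<in> path_edges xs"
proof -
  obtain i j where i: "i < length xs" "xs ! i = x" and j: "j < length xs" "xs ! j = y"
    using xy by (auto simp: in_set_conv_nth)
  have xy': "x \<noteq> y" using edge_V e by auto
  have key: "{x,y} \<in> path_edges xs" if ij: "i \<le> j" "xs ! i = x" "xs ! j = y" "j < length xs" "{x,y} \<in> E" for i j x y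
  proof -
    have "tp x y = take (Suc (j - i)) (drop i xs)" using tp_sub[OF p V ij(1) ij(4)] ij by simp
    moreover have "tp x y = [x,y]" using tp_edge ij(5) by simp
    ultimately have t: "take (Suc (j - i)) (drop i xs) = [x,y]" by simp
    have "length (take (Suc (j - i)) (drop i xs)) = Suc (j - i)" using ij by simp
    with t have "Suc (j - i) = 2" by simp
    then have "j = Suc i" using ij by auto
    then show ?thesis using ij unfolding path_edges_def by auto
  qed
  show ?thesis
  proof (cases "i \<le> j")
    case True then show ?thesis using key i j e by blast
  next
    case False then show ?thesis using key[of j i y x] i j e by (simp add: insert_commute)
  qed
qed

lemma tpr_props: "v \<in> V \<Longrightarrow> is_path E (tp r v) \<and> hd (tp r v) = r \<and> last (tp r v) = v"
  using tp_props rV by blast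

lemma dep_pos: "v \<in> V \<Longrightarrow> 0 < dep v"
  using tp_ne rV by (simp add: depth_def)

lemma anc_refl: "v \<in> V \<Longrightarrow> anc v v"
  using tpr_props tp_ne rV by (metis ancestor_def last_in_set)

lemma anc_root: "v \<in> V \<Longrightarrow> anc r v"
  using tpr_props tp_ne rV by (metis ancestor_def hd_in_set)

lemma anc_V: "v \<in> V \<Longrightarrow> anc x v \<Longrightarrow> x \<in> V"
  using tp_V rV by (auto simp: ancestor_def)

lemma tp_prefix:
  assumes v: "v \<in> V" and i: "i < length (tp r v)"
  shows "tp r (tp r v ! i) = take (Suc i) (tp r v)"
proof -
  have "tp (tp r v ! 0) (tp r v ! i) = take (Suc i) (tp r v)"
    using tp_sub[of "tp r v" 0 i] tpr_props[OF v] i rV by simp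
  moreover have "tp r v ! 0 = r" using tpr_props[OF v] tp_ne[OF rV v] by (metis hd_conv_nth)
  ultimately show ?thesis by simp
qed

lemma anc_take: assumes v: "v \<in> V" and a: "anc x v"
  shows "tp r x = take (dep x) (tp r v)"
proof -
  obtain i where i: "i < length (tp r v)" "tp r v ! i = x" using a by (auto simp: ancestor_def in_set_conv_nth)
  then have "tp r x = take (Suc i) (tp r v)" using tp_prefix v by metis
  moreover then have "dep x = Suc i" using i by (simp add: depth_def)
  ultimately show ?thesis by simp
qed

lemma anc_dep_le: assumes "v \<in> V" "anc x v" shows "dep x \<le> dep v"
proof -
  have "length (tp r x) = length (take (dep x) (tp r v))" using anc_take[OF assms] by simp
  then show ?thesis by (simp add: depth_def min_def split: if_splits)
qed

lemma anc_nth: assumes v: "v \<in> V" and a: "anc x v"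
  shows "tp r v ! (dep x - 1) = x"
proof -
  have xV: "x \<in> V" using anc_V v a by blast
  have t: "tp r x = take (dep x) (tp r v)" using anc_take v a by blast
  have p: "0 < dep x" using dep_pos xV by blast
  have le: "dep x \<le> length (tp r v)" using anc_dep_le v a by (simp add: depth_def)
  have "x = last (tp r x)" using tpr_props xV by simp
  also have "\<dots> = tp r x ! (dep x - 1)"
    using tp_ne[OF rV xV] by (simp add: last_conv_nth depth_def)
  also have "\<dots> = tp r v ! (dep x - 1)" using t p le by simp
  finally show ?thesis by simp
qed

lemma anc_eq: assumes v: "v \<in> V" and a: "anc x v" and d: "dep x = dep v" shows "x = v"
proof -
  have "x = tp r v ! (dep x - 1)" using anc_nth[OF v a] by simp
  also have "\<dots> = tp r v ! (dep v - 1)" using d by simp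
  also have "\<dots> = v" using anc_nth[OF v anc_refl[OF v]] by simp
  finally show ?thesis .
qed

lemma anc_trans: assumes "anc x y" "anc y z" "z \<in> V" shows "anc x z"
proof -
  have yV: "y \<in> V" using anc_V assms by blast
  have "tp r y = take (dep y) (tp r z)" using anc_take assms yV by blast
  then have "set (tp r y) \<subseteq> set (tp r z)" using set_take_subset by metis
  then show ?thesis using assms(1) unfolding ancestor_def by blast
qed

lemma anc_antisym: "anc x y \<Longrightarrow> anc y x \<Longrightarrow> y \<in> V \<Longrightarrow> x = y"
  by (meson anc_V anc_dep_le anc_eq le_antisym)

lemma anc_lin: assumes "anc x v" "anc y v" "v \<in> V" shows "anc x y \<or> anc y x"
proof -
  have xV: "x \<in> V" and yV: "y \<in> V" using anc_V assms by blast+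
  have tx: "tp r x = take (dep x) (tp r v)" and ty: "tp r y = take (dep y) (tp r v)"
    using anc_take assms by blast+
  show ?thesis
  proof (cases "dep x \<le> dep y")
    case True
    then have "take (dep x) (tp r y) = tp r x" using tx ty by (simp add: min_def)
    moreover have "x \<in> set (tp r x)" using anc_refl[OF xV] by (simp add: ancestor_def)
    ultimately have "x \<in> set (tp r y)" by (metis in_set_takeD)
    then show ?thesis by (simp add: ancestor_def)
  next
    case False
    then have "take (dep y) (tp r x) = tp r y" using tx ty by (simp add: min_def)
    moreover have "y \<in> set (tp r y)" using anc_refl[OF yV] by (simp add: ancestor_def)
    ultimately have "y \<in> set (tp r x)" by (metis in_set_takeD)
    then show ?thesis by (simp add: ancestor_def)
  qed
qed

lemma anc_lin_dep: assumes "anc x v" "anc y v" "v \<in> V" "dep x \<le> dep y" shows "anc x y"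
proof -
  have xV: "x \<in> V" using anc_V assms by blast
  show ?thesis
  proof (cases "anc x y")
    case False
    then have "anc y x" using anc_lin[OF assms(1-3)] by blast
    moreover then have "dep y \<le> dep x" using anc_dep_le xV by blast
    ultimately have "y = x" using anc_eq xV assms(4) by simp
    then show ?thesis using anc_refl xV by simp
  qed simp
qed

definition par :: "'v \<Rightarrow> 'v" where "par v = tp r v ! (dep v - 2)"

lemma dep_r: "dep r = 1" using tp_refl rV by (simp add: depth_def)

lemma dep_ge2: assumes "v \<in> V" "v \<noteq> r" shows "2 \<le> dep v"
proof (rule ccontr)
  assume "\<not> 2 \<le> dep v"
  then have "dep v = 1" using dep_pos[OF assms(1)] by simp
  then have "dep r = dep v" using dep_r by simp
  then have "r = v" using anc_eq[OF assms(1) anc_root[OF assms(1)]] by simp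
  then show False using assms by simp
qed

lemma par_props: assumes v: "v \<in> V" "v \<noteq> r"
  shows "par v \<in> V" "anc (par v) v" "dep (par v) = dep v - 1" "{par v, v} \<in> E" "par v \<noteq> v"
proof -
  have d: "2 \<le> dep v" using dep_ge2 v by blast
  let ?xs = "tp r v"
  have l: "length ?xs = dep v" by (simp add: depth_def)
  have inset: "par v \<in> set ?xs" unfolding par_def using d l by simp
  then show a: "anc (par v) v" by (simp add: ancestor_def)
  show pV: "par v \<in> V" using anc_V v a by blast
  have "tp r (par v) = take (Suc (dep v - 2)) ?xs" unfolding par_def
  proof (rule tp_prefix[OF v(1)])
    show "dep v - 2 < length (tp r v)" using d l by simp
  qed
  then show dp: "dep (par v) = dep v - 1" using d by (simp add: depth_def)
  have "{?xs ! (dep v - 2), ?xs ! Suc (dep v - 2)} \<in> E"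
    using tpr_props[OF v(1)] d l unfolding is_path_def by auto
  moreover have "?xs ! Suc (dep v - 2) = v"
  proof -
    have "Suc (dep v - 2) = dep v - 1" using d by simp
    then show ?thesis using anc_nth[OF v(1) anc_refl[OF v(1)]] by simp
  qed
  ultimately show "{par v, v} \<in> E" by (simp add: par_def)
  show "par v \<noteq> v" using dp d by auto
qed

lemma anc_par: assumes v: "v \<in> V" and a: "anc x v" and ne: "x \<noteq> v"
  shows "anc x (par v)"
proof -
  have vr: "v \<noteq> r"
  proof
    assume "v = r"
    then have "anc x r" using a by simp
    moreover have "x \<in> V" using anc_V v a by blast
    moreover then have "anc r x" using anc_root by blast
    ultimately have "x = r" using anc_antisym rV by blast
    then show False using ne \<open>v = r\<close> by simp
  qed
  note pp = par_props[OF v vr]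
  have "dep x \<noteq> dep v" using anc_eq v a ne by blast
  moreover have "dep x \<le> dep v" by (rule anc_dep_le[OF v a])
  ultimately have "dep x \<le> dep (par v)" using pp(3) by simp
  then show ?thesis by (rule anc_lin_dep[OF a pp(2) v])
qed

lemma tp_vertical: assumes "anc x y" "y \<in> V"
  shows "tp x y = drop (dep x - 1) (tp r y)"
proof -
  have xV: "x \<in> V" using anc_V assms by blast
  have d: "0 < dep x" "dep x \<le> dep y" using dep_pos xV anc_dep_le assms by auto
  have l: "length (tp r y) = dep y" by (simp add: depth_def)
  have "tp (tp r y ! (dep x - 1)) (tp r y ! (dep y - 1)) = take (Suc (dep y - 1 - (dep x - 1))) (drop (dep x - 1) (tp r y))"
    using tp_sub[of "tp r y" "dep x - 1" "dep y - 1"] tpr_props[OF assms(2)] d l rV by simp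
  moreover have "tp r y ! (dep x - 1) = x" using anc_nth[OF assms(2,1)] .
  moreover have "tp r y ! (dep y - 1) = y" using anc_nth[OF assms(2) anc_refl[OF assms(2)]] .
  moreover have "take (Suc (dep y - 1 - (dep x - 1))) (drop (dep x - 1) (tp r y)) = drop (dep x - 1) (tp r y)"
    using d l by (intro take_all) simp
  ultimately show ?thesis by simp
qed

lemma edge_par: assumes e: "{x,y} \<in> E"
  shows "(y \<noteq> r \<and> x = par y) \<or> (x \<noteq> r \<and> y = par x)"
proof -
  have V: "x \<in> V" "y \<in> V" "x \<noteq> y" using edge_V e by auto
  show ?thesis
  proof (cases "x \<in> set (tp r y)")
    case True
    then have a: "anc x y" by (simp add: ancestor_def)
    have yr: "y \<noteq> r" using a V anc_antisym anc_root by blast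
    have "tp x y = drop (dep x - 1) (tp r y)" using tp_vertical a V by blast
    moreover have "tp x y = [x,y]" using tp_edge e by blast
    ultimately have t: "drop (dep x - 1) (tp r y) = [x,y]" by simp
    have "length (drop (dep x - 1) (tp r y)) = 2" unfolding t by simp
    then have "dep y - (dep x - 1) = 2" by (simp add: depth_def)
    moreover have "0 < dep x" using dep_pos V by blast
    ultimately have d: "dep x = dep (par y)" using par_props[OF V(2) yr] by simp
    have "anc x (par y)" using anc_par V a by blast
    then have "x = par y" using anc_eq par_props[OF V(2) yr] d by metis
    then show ?thesis using yr by blast
  next
    case False
    have "is_path E (tp r y @ [x])"
      using is_path_snoc[of E "tp r y" x] tpr_props[OF V(2)] False e by (simp add: insert_commute)
    then have "tp r x = tp r y @ [x]" using tp_unique[OF rV V(1)] tpr_props[OF V(2)] tp_ne rV V by auto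
    moreover have "y \<in> set (tp r y)" using anc_refl V by (simp add: ancestor_def)
    ultimately have "anc y x" "dep x = Suc (dep y)" by (auto simp: ancestor_def depth_def)
    moreover have xr: "x \<noteq> r" using calculation(2) dep_r dep_pos[OF V(2)] by auto
    ultimately have "anc y (par x)" "dep (par x) = dep y"
      using anc_par par_props V by auto
    then have "y = par x" using anc_eq par_props V xr by metis
    then show ?thesis using xr by blast
  qed
qed

lemma set_tp_vertical: assumes "anc x y" "y \<in> V"
  shows "set (tp x y) = {z. anc x z \<and> anc z y}"
proof -
  have xV: "x \<in> V" using anc_V assms by blast
  have dx: "0 < dep x" "dep x \<le> dep y" using dep_pos xV anc_dep_le assms by auto
  have l: "length (tp r y) = dep y" by (simp add: depth_def)
  have xn: "tp r y ! (dep x - 1) = x" using anc_nth assms by blast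
  show ?thesis
  proof safe
    fix z assume z: "z \<in> set (tp x y)"
    then have zd: "z \<in> set (drop (dep x - 1) (tp r y))" using tp_vertical[OF assms] by simp
    then have zy: "anc z y" by (auto simp: ancestor_def dest: in_set_dropD)
    obtain i where i: "i < length (drop (dep x - 1) (tp r y))" "drop (dep x - 1) (tp r y) ! i = z"
      using zd by (auto simp: in_set_conv_nth)
    have il: "dep x - 1 + i < length (tp r y)" using i by simp
    have zz: "z = tp r y ! (dep x - 1 + i)" using i dx by simp
    then have "tp r z = take (Suc (dep x - 1 + i)) (tp r y)" using tp_prefix assms(2) il by simp
    moreover have "x \<in> set (take (Suc (dep x - 1 + i)) (tp r y))"
    proof -
      have "take (Suc (dep x - 1 + i)) (tp r y) ! (dep x - 1) = x" using xn by simp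
      moreover have "dep x - 1 < length (take (Suc (dep x - 1 + i)) (tp r y))" using il by simp
      ultimately show ?thesis using nth_mem by metis
    qed
    ultimately show "anc x z" by (simp add: ancestor_def)
    show "anc z y" by (rule zy)
  next
    fix z assume z: "anc x z" "anc z y"
    have zV: "z \<in> V" using anc_V z assms by blast
    have d1: "dep x \<le> dep z" using anc_dep_le z zV by blast
    have d2: "dep z \<le> dep y" using anc_dep_le z assms by blast
    have zn: "tp r y ! (dep z - 1) = z" using anc_nth z assms by blast
    have "drop (dep x - 1) (tp r y) ! (dep z - dep x) = tp r y ! (dep x - 1 + (dep z - dep x))"
      using l d1 d2 dx by simp
    also have "dep x - 1 + (dep z - dep x) = dep z - 1" using d1 dx by simp
    finally have "drop (dep x - 1) (tp r y) ! (dep z - dep x) = z" using zn by simp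
    moreover have "dep z - dep x < length (drop (dep x - 1) (tp r y))" using l d1 d2 dx by simp
    ultimately have "z \<in> set (drop (dep x - 1) (tp r y))" by (metis nth_mem)
    then show "z \<in> set (tp x y)" using tp_vertical[OF assms] by simp
  qed
qed

end


locale icover =
  fixes n0 n1 :: nat and S :: "'a set" and D :: "'a \<Rightarrow> nat set"
  assumes finS: "finite S"
    and Dsub: "\<And>x. x \<in> S \<Longrightarrow> D x \<subseteq> {n0..n1}"
    and conv: "\<And>x i j k. x \<in> S \<Longrightarrow> i \<in> D x \<Longrightarrow> k \<in> D x \<Longrightarrow> i \<le> j \<Longrightarrow> j \<le> k \<Longrightarrow> j \<in> D x"
    and cover: "{n0..n1} \<subseteq> \<Union>(D ` S)"
    and minimal: "\<And>S'. S' \<subset> S \<Longrightarrow> \<not> {n0..n1} \<subseteq> \<Union>(D ` S')"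
begin

definition Pv where "Pv x = {n0..n1} - \<Union>(D ` (S - {x}))"
definition precv where "precv x y \<longleftrightarrow> (\<forall>i\<in>Pv x. \<forall>j\<in>Pv y. i < j)"
definition lo where "lo x = Min (D x)"
definition hi where "hi x = Max (D x)"
definition consec where "consec x y \<longleftrightarrow> x \<in> S \<and> y \<in> S \<and> x \<noteq> y \<and> precv x y \<and>
   \<not> (\<exists>z\<in>S. z \<noteq> x \<and> z \<noteq> y \<and> precv x z \<and> precv z y)"

lemma Pv_ne: assumes "x \<in> S" shows "Pv x \<noteq> {}"
proof
  assume "Pv x = {}"
  then have "{n0..n1} \<subseteq> \<Union>(D ` (S - {x}))" unfolding Pv_def by blast
  moreover have "S - {x} \<subset> S" using assms by blast
  ultimately show False using minimal by blast
qed

lemma Pv_D: assumes "x \<in> S" "i \<in> Pv x" shows "i \<in> D x" "i \<in> {n0..n1}" "\<And>y. y \<in> S \<Longrightarrow> y \<noteq> x \<Longrightarrow> i \<notin> D y"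
proof -
  show "i \<in> {n0..n1}" using assms by (simp add: Pv_def)
  then obtain y where "y \<in> S" "i \<in> D y" using cover by blast
  moreover have "\<And>y. y \<in> S \<Longrightarrow> y \<noteq> x \<Longrightarrow> i \<notin> D y" using assms by (auto simp: Pv_def)
  ultimately show "i \<in> D x" by (cases "y = x") auto
  show "\<And>y. y \<in> S \<Longrightarrow> y \<noteq> x \<Longrightarrow> i \<notin> D y" using assms by (auto simp: Pv_def)
qed

lemma D_ne: "x \<in> S \<Longrightarrow> D x \<noteq> {}"
  using Pv_ne Pv_D by blast

lemma finD: "x \<in> S \<Longrightarrow> finite (D x)"
  using Dsub finite_subset by blast

lemma D_eq: assumes "x \<in> S" shows "D x = {lo x..hi x}" "lo x \<le> hi x" "n0 \<le> lo x" "hi x \<le> n1"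
proof -
  have f: "finite (D x)" "D x \<noteq> {}" using finD D_ne assms by auto
  have l: "lo x \<in> D x" "hi x \<in> D x" using f by (auto simp: lo_def hi_def)
  show "D x = {lo x..hi x}"
  proof
    show "D x \<subseteq> {lo x..hi x}" using f by (auto simp: lo_def hi_def)
    show "{lo x..hi x} \<subseteq> D x" using conv[OF assms l(1) l(2)] by auto
  qed
  show "lo x \<le> hi x" using f by (simp add: lo_def hi_def)
  show "n0 \<le> lo x" using l Dsub[OF assms] by auto
  show "hi x \<le> n1" using l Dsub[OF assms] by auto
qed

lemma no_contain: assumes "x \<in> S" "y \<in> S" "x \<noteq> y" shows "\<not> D x \<subseteq> D y"
proof
  assume "D x \<subseteq> D y"
  obtain i where "i \<in> Pv x" using Pv_ne assms by blast
  then show False using Pv_D[OF assms(1)] assms \<open>D x \<subseteq> D y\<close> by blast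
qed

lemma lo_neq: assumes "x \<in> S" "y \<in> S" "x \<noteq> y" shows "lo x \<noteq> lo y"
proof
  assume e: "lo x = lo y"
  note dx = D_eq[OF assms(1)] and dy = D_eq[OF assms(2)]
  show False
  proof (cases "hi x \<le> hi y")
    case True then have "D x \<subseteq> D y" using dx dy e by auto
    then show False using no_contain assms by blast
  next
    case False then have "D y \<subseteq> D x" using dx dy e by auto
    then show False using no_contain assms by blast
  qed
qed

lemma lo_hi_mono: assumes "x \<in> S" "y \<in> S" "lo x < lo y" shows "hi x < hi y"
proof (rule ccontr)
  assume "\<not> hi x < hi y"
  then have "D y \<subseteq> D x" using D_eq[OF assms(1)] D_eq[OF assms(2)] assms(3) by auto
  moreover have "x \<noteq> y" using assms by auto
  ultimately show False using no_contain assms by blast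
qed

lemma precv_lo: assumes "x \<in> S" "y \<in> S" "lo x < lo y" shows "precv x y"
  unfolding precv_def
proof (intro ballI)
  fix i j assume i: "i \<in> Pv x" and j: "j \<in> Pv y"
  have xy: "x \<noteq> y" using assms by auto
  have "i \<in> D x" "i \<notin> D y" "j \<in> D y" "j \<notin> D x" using Pv_D i j assms xy by auto
  then show "i < j" using D_eq[OF assms(1)] D_eq[OF assms(2)] lo_hi_mono[OF assms] by auto
qed

lemma precv_iff: assumes "x \<in> S" "y \<in> S" "x \<noteq> y" shows "precv x y \<longleftrightarrow> lo x < lo y"
proof
  assume p: "precv x y"
  show "lo x < lo y"
  proof (rule ccontr)
    assume "\<not> lo x < lo y"
    then have "lo y < lo x" using lo_neq assms by fastforce
    then have "precv y x" using precv_lo assms by blast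
    obtain i j where "i \<in> Pv x" "j \<in> Pv y" using Pv_ne assms by blast
    then show False using p \<open>precv y x\<close> unfolding precv_def by force
  qed
qed (rule precv_lo[OF assms(1,2)])

lemma consec_gap: assumes c: "consec x y" shows "lo y \<le> Suc (hi x)"
proof (rule ccontr)
  assume a: "\<not> lo y \<le> Suc (hi x)"
  have xy: "x \<in> S" "y \<in> S" "x \<noteq> y" "precv x y" using c by (auto simp: consec_def)
  have lxy: "lo x < lo y" using precv_iff xy by blast
  note dx = D_eq[OF xy(1)] and dy = D_eq[OF xy(2)]
  let ?d = "Suc (hi x)"
  have "?d \<in> {n0..n1}" using dx dy a by auto
  then obtain z where z: "z \<in> S" "?d \<in> D z" using cover by blast
  note dz = D_eq[OF z(1)]
  have zx: "z \<noteq> x" using z dx by auto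
  have zy: "z \<noteq> y" using z dy a by auto
  have "lo x < lo z"
  proof (rule ccontr)
    assume "\<not> lo x < lo z"
    then have "lo z < lo x" using lo_neq z xy zx by fastforce
    then have "hi z < hi x" using lo_hi_mono z xy by blast
    then show False using z dz by auto
  qed
  moreover have "lo z < lo y" using z dz a by auto
  ultimately have "precv x z" "precv z y" using precv_lo z xy by auto
  then show False using c z zx zy by (auto simp: consec_def)
qed

lemma between_gap: assumes "x \<in> S" "y \<in> S" "z \<in> S" "precv x z" "precv z y"
  shows "Suc (hi x) < lo y"
proof (rule ccontr)
  assume a: "\<not> Suc (hi x) < lo y"
  have xz: "x \<noteq> z" "z \<noteq> y"
  proof -
    obtain i where "i \<in> Pv z" using Pv_ne assms by blast
    then show "x \<noteq> z" "z \<noteq> y" using assms(4,5) unfolding precv_def by force+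
  qed
  have l1: "lo x < lo z" using precv_iff assms xz by blast
  have l2: "lo z < lo y" using precv_iff assms xz by blast
  have h2: "hi z < hi y" using lo_hi_mono assms l2 by blast
  have "D z \<subseteq> D x \<union> D y" using D_eq[OF assms(1)] D_eq[OF assms(2)] D_eq[OF assms(3)] l1 h2 a by auto
  moreover obtain i where i: "i \<in> Pv z" using Pv_ne assms by blast
  moreover have "x \<noteq> y" using l1 l2 by auto
  ultimately show False using Pv_D[OF assms(3) i] assms xz by blast
qed

lemma first_ex: assumes "n0 \<le> n1" shows "\<exists>g\<in>S. lo g = n0"
proof -
  have "n0 \<in> {n0..n1}" using assms by simp
  then obtain g where g: "g \<in> S" "n0 \<in> D g" using cover by blast
  then have "lo g \<le> n0" using D_eq[OF g(1)] by auto
  then show ?thesis using g D_eq[OF g(1)] by force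
qed

lemma first_unique: assumes "g \<in> S" "z \<in> S" "lo g = n0" "z \<noteq> g" shows "n0 < lo z"
proof -
  have "lo z \<noteq> lo g" using lo_neq assms by blast
  moreover have "n0 \<le> lo z" using D_eq(3)[OF assms(2)] .
  ultimately show ?thesis using assms(3) by simp
qed

lemma after_first: assumes c: "consec g q" and g0: "lo g = n0" and z: "z \<in> S" "z \<noteq> g" "z \<noteq> q"
  shows "lo q < lo z"
proof -
  have gq: "g \<in> S" "q \<in> S" "g \<noteq> q" "precv g q" using c by (auto simp: consec_def)
  have "n0 < lo z" using first_unique gq z g0 by blast
  then have "precv g z" using precv_lo gq z g0 by simp
  then have "\<not> precv z q" using c z by (auto simp: consec_def)
  then have "\<not> lo z < lo q" using precv_lo z gq by blast
  then show ?thesis using lo_neq z gq by fastforce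
qed

lemma Pv_before: assumes c: "consec g q" and i: "i \<in> Pv g" shows "i < lo q"
proof (rule ccontr)
  assume a: "\<not> i < lo q"
  have gq: "g \<in> S" "q \<in> S" "g \<noteq> q" "precv g q" using c by (auto simp: consec_def)
  obtain j where j: "j \<in> Pv q" using Pv_ne gq by blast
  have "i < j" using gq(4) i j unfolding precv_def by blast
  moreover have "j \<le> hi q" using Pv_D[OF gq(2) j] D_eq[OF gq(2)] by auto
  ultimately have "i \<in> D q" using a D_eq[OF gq(2)] by auto
  then show False using Pv_D[OF gq(1) i] gq by blast
qed

lemma consec_unique_succ: assumes "consec x y" "consec x y'" shows "y = y'"
proof (rule ccontr)
  assume ne: "y \<noteq> y'"
  have s: "x \<in> S" "y \<in> S" "y' \<in> S" "x \<noteq> y" "x \<noteq> y'" "precv x y" "precv x y'"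
    using assms by (auto simp: consec_def)
  show False
  proof (cases "lo y < lo y'")
    case True
    then have "precv y y'" using precv_lo s by blast
    then show False using assms(2) s ne by (auto simp: consec_def)
  next
    case False
    then have "lo y' < lo y" using lo_neq s ne by fastforce
    then have "precv y' y" using precv_lo s by blast
    then show False using assms(1) s ne by (auto simp: consec_def)
  qed
qed

lemma consec_unique_pred: assumes "consec x y" "consec x' y" shows "x = x'"
proof (rule ccontr)
  assume ne: "x \<noteq> x'"
  have s: "x \<in> S" "y \<in> S" "x' \<in> S" "x \<noteq> y" "x' \<noteq> y" "precv x y" "precv x' y"
    using assms by (auto simp: consec_def)
  show False
  proof (cases "lo x < lo x'")
    case True
    then have "precv x x'" using precv_lo s by blast
    then show False using assms(1) s ne by (auto simp: consec_def)
  next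
    case False
    then have "lo x' < lo x" using lo_neq s ne by fastforce
    then have "precv x' x" using precv_lo s by blast
    then show False using assms(2) s ne by (auto simp: consec_def)
  qed
qed

end


lemma UN_pair: "a \<noteq> b \<Longrightarrow> (\<Union>x\<in>{a,b}. \<Union>y\<in>{a,b} - {x}. f x y) = f a b \<union> f b a"
  by auto

context tree_r begin

definition is_link where "is_link l \<longleftrightarrow> (\<exists>a b. l = {a,b} \<and> a \<in> V \<and> b \<in> V \<and> a \<noteq> b)"

lemma Vl_pair: assumes "a \<in> V" "b \<in> V" "a \<noteq> b" shows "Vl E {a,b} = set (tp a b)"
proof -
  have "Vl E {a,b} = (\<Union>x\<in>{a,b}. \<Union>y\<in>{a,b} - {x}. set (tp x y))" unfolding Vl_def by (rule refl)
  also have "\<dots> = set (tp a b) \<union> set (tp b a)" by (rule UN_pair[OF assms(3)])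
  also have "set (tp b a) = set (tp a b)" by (simp add: tp_rev[OF assms(1,2)])
  finally show ?thesis by simp
qed

lemma Pl_pair: assumes "a \<in> V" "b \<in> V" "a \<noteq> b" shows "Pl E {a,b} = path_edges (tp a b)"
proof -
  have "Pl E {a,b} = (\<Union>x\<in>{a,b}. \<Union>y\<in>{a,b} - {x}. path_edges (tp x y))" unfolding Pl_def by (rule refl)
  also have "\<dots> = path_edges (tp a b) \<union> path_edges (tp b a)" by (rule UN_pair[OF assms(3)])
  also have "path_edges (tp b a) = path_edges (tp a b)" by (simp add: tp_rev[OF assms(1,2)] path_edges_rev)
  finally show ?thesis by simp
qed

lemma link_path: assumes "is_link l"
  obtains xs where "is_path E xs" "hd xs \<in> V" "Vl E l = set xs" "Pl E l = path_edges xs"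
  using assms Vl_pair Pl_pair tp_props unfolding is_link_def by metis

lemma Vl_sub: assumes "is_link l" shows "Vl E l \<subseteq> V" "Vl E l \<noteq> {}"
proof -
  obtain xs where xs: "is_path E xs" "hd xs \<in> V" "Vl E l = set xs" "Pl E l = path_edges xs"
    using link_path assms by blast
  show "Vl E l \<subseteq> V" using path_V xs by simp
  show "Vl E l \<noteq> {}" using xs by (simp add: is_path_def)
qed

abbreviation ap where "ap \<equiv> apex E r"

lemma apex_min: assumes "is_link l" shows "ap l \<in> Vl E l" "\<And>z. z \<in> Vl E l \<Longrightarrow> dep (ap l) \<le> dep z"
proof -
  obtain z0 where "z0 \<in> Vl E l" using Vl_sub assms by blast
  note a = arg_min_nat_lemma[of "\<lambda>x. x \<in> Vl E l", OF this, of "dep"]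
  show "ap l \<in> Vl E l" using a by (simp add: apex_def)
  show "\<And>z. z \<in> Vl E l \<Longrightarrow> dep (ap l) \<le> dep z" using a by (simp add: apex_def)
qed

lemma path_anc_hd:
  assumes "is_path E ys" "hd ys \<in> V" "\<forall>z\<in>set ys. dep (hd ys) \<le> dep z"
  shows "\<forall>z\<in>set ys. anc (hd ys) z"
  using assms
proof (induction ys rule: rev_induct)
  case Nil then show ?case by simp
next
  case (snoc y ys)
  show ?case
  proof (cases "ys = []")
    case True
    then show ?thesis using snoc anc_refl by simp
  next
    case False
    have p: "is_path E ys" using is_path_append1 snoc(2) False by blast
    have h: "hd (ys @ [y]) = hd ys" using False by simp
    have IH: "\<forall>z\<in>set ys. anc (hd ys) z" using snoc.IH p snoc(3,4) h by simp
    let ?x = "last ys"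
    have e: "{?x, y} \<in> E"
    proof -
      have "Suc (length ys - 1) < length (ys @ [y])" using False by simp
      then have "{(ys@[y]) ! (length ys - 1), (ys@[y]) ! Suc (length ys - 1)} \<in> E"
        using snoc(2) unfolding is_path_def by blast
      moreover have "(ys@[y]) ! (length ys - 1) = ?x" using False by (simp add: nth_append last_conv_nth)
      moreover have "(ys@[y]) ! Suc (length ys - 1) = y" using False by (simp add: nth_append)
      ultimately show ?thesis by simp
    qed
    have ax: "anc (hd ys) ?x" using IH False by simp
    have yV: "y \<in> V" using edge_V e by blast
    have "anc (hd ys) y"
    proof (cases "y \<noteq> r \<and> ?x = par y")
      case True
      then have "anc ?x y" using par_props yV by metis
      then show ?thesis using anc_trans ax yV by blast
    next
      case False
      then have xr: "?x \<noteq> r" "y = par ?x" using edge_par e by blast+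
      have xV: "?x \<in> V" using edge_V e by blast
      have "anc y ?x" using par_props xV xr by metis
      moreover have "dep (hd ys) \<le> dep y" using snoc(4) h by simp
      ultimately show ?thesis using anc_lin_dep[OF ax _ xV] by blast
    qed
    then show ?thesis using IH h by simp
  qed
qed

lemma apex_anc: assumes l: "is_link l" and z: "z \<in> Vl E l" shows "anc (ap l) z"
proof -
  obtain xs where xs: "is_path E xs" "hd xs \<in> V" "Vl E l = set xs" "Pl E l = path_edges xs"
    using link_path l by blast
  have sV: "set xs \<subseteq> V" using path_V xs by simp
  obtain k where k: "k < length xs" "xs ! k = ap l" using apex_min(1)[OF l] xs(3) by (auto simp: in_set_conv_nth)
  have mn: "\<forall>z\<in>set xs. dep (ap l) \<le> dep z" using apex_min(2)[OF l] xs(3) by blast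
  have apV: "ap l \<in> V" using apex_min(1)[OF l] Vl_sub(1)[OF l] by blast
  let ?ys1 = "drop k xs" and ?ys2 = "rev (take (Suc k) xs)"
  have p1: "is_path E ?ys1" using is_path_drop xs k by blast
  have p2: "is_path E ?ys2" using is_path_rev is_path_take xs by blast
  have h1: "hd ?ys1 = ap l" using k by (simp add: hd_drop_conv_nth)
  have h2: "hd ?ys2 = ap l"
  proof -
    have "hd ?ys2 = last (take (Suc k) xs)" by (simp add: hd_rev)
    also have "\<dots> = xs ! k" using last_take_drop[of 0 k xs] k by simp
    finally show ?thesis using k by simp
  qed
  have s1: "set ?ys1 \<subseteq> set xs" by (rule set_drop_subset)
  have s2: "set ?ys2 \<subseteq> set xs" by (simp add: set_take_subset)
  have a1: "\<forall>z\<in>set ?ys1. anc (ap l) z" using path_anc_hd[OF p1] h1 apV mn s1 by auto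
  have a2: "\<forall>z\<in>set ?ys2. anc (ap l) z" using path_anc_hd[OF p2] h2 apV mn s2 by auto
  have "set xs = set (take (Suc k) xs) \<union> set (drop (Suc k) xs)" by (metis append_take_drop_id set_append)
  also have "\<dots> \<subseteq> set (take (Suc k) xs) \<union> set (drop k xs)"
  proof -
    have "set (drop (Suc k) xs) \<subseteq> set (drop k xs)" by (rule set_drop_subset_set_drop) simp
    then show ?thesis by blast
  qed
  finally have "set xs \<subseteq> set (take (Suc k) xs) \<union> set (drop k xs)" .
  then show ?thesis using a1 a2 z xs(3) by auto
qed

lemma link_convex: assumes l: "is_link l" and x: "x \<in> Vl E l" and y: "y \<in> Vl E l"
  and xz: "anc x z" and zy: "anc z y" shows "z \<in> Vl E l"
proof -
  obtain xs where xs: "is_path E xs" "hd xs \<in> V" "Vl E l = set xs" "Pl E l = path_edges xs"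
    using link_path l by blast
  have yV: "y \<in> V" using Vl_sub l y by blast
  have "z \<in> set (tp x y)" using set_tp_vertical[OF anc_trans[OF xz zy yV] yV] xz zy by simp
  then show ?thesis using tp_sub_set[OF xs(1,2)] x y xs(3) by blast
qed

lemma apex_par_notin: assumes l: "is_link l" and hr: "ap l \<noteq> r" shows "par (ap l) \<notin> Vl E l"
proof
  assume a: "par (ap l) \<in> Vl E l"
  have hV: "ap l \<in> V" using apex_min Vl_sub l by blast
  have "anc (ap l) (par (ap l))" using apex_anc l a by blast
  moreover have "anc (par (ap l)) (ap l)" using par_props hV hr by blast
  ultimately have "par (ap l) = ap l" using anc_antisym[of "par (ap l)" "ap l"] hV by blast
  then show False using par_props(5)[OF hV hr] by blast
qed

lemma Pl_char: assumes l: "is_link l"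
  shows "e \<in> Pl E l \<longleftrightarrow> (\<exists>z\<in>Vl E l. z \<noteq> ap l \<and> z \<noteq> r \<and> e = {z, par z})"
proof -
  obtain xs where xs: "is_path E xs" "hd xs \<in> V" "Vl E l = set xs" "Pl E l = path_edges xs"
    using link_path l by blast
  have sV: "set xs \<subseteq> V" using path_V xs by simp
  show ?thesis
  proof
    assume "e \<in> Pl E l"
    then obtain i where i: "Suc i < length xs" "e = {xs ! i, xs ! Suc i}" using xs(4) by (auto simp: path_edges_def)
    have eE: "e \<in> E" using xs(1) i unfolding is_path_def by auto
    have inV: "xs ! i \<in> Vl E l" "xs ! Suc i \<in> Vl E l" using i xs(3) by auto
    have child: "z \<noteq> ap l" if "z \<in> Vl E l" "z \<noteq> r" "par z \<in> Vl E l" for z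
    proof
      assume "z = ap l"
      then show False using apex_par_notin l that by blast
    qed
    have "{xs ! i, xs ! Suc i} \<in> E" using eE i by simp
    from edge_par[OF this]
    show "\<exists>z\<in>Vl E l. z \<noteq> ap l \<and> z \<noteq> r \<and> e = {z, par z}"
    proof (elim disjE conjE)
      assume "xs ! Suc i \<noteq> r" "xs ! i = par (xs ! Suc i)"
      then show ?thesis using child inV i by (intro bexI[of _ "xs ! Suc i"]) (auto simp: insert_commute)
    next
      assume "xs ! i \<noteq> r" "xs ! Suc i = par (xs ! i)"
      then show ?thesis using child inV i by (intro bexI[of _ "xs ! i"]) auto
    qed
  next
    assume "\<exists>z\<in>Vl E l. z \<noteq> ap l \<and> z \<noteq> r \<and> e = {z, par z}"
    then obtain z where z: "z \<in> Vl E l" "z \<noteq> ap l" "z \<noteq> r" "e = {z, par z}" by blast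
    have zV: "z \<in> V" using z sV xs by blast
    have hz: "anc (ap l) z" using apex_anc l z by blast
    have "anc (ap l) (par z)" using anc_par zV hz z by blast
    moreover have "anc (par z) z" using par_props zV z by blast
    ultimately have pz: "par z \<in> Vl E l" using link_convex[OF l apex_min(1)[OF l] z(1)] by blast
    have "{par z, z} \<in> E" using par_props zV z by blast
    then have "{par z, z} \<in> path_edges xs" using edge_in_path[OF xs(1,2)] pz z xs(3) by blast
    then show "e \<in> Pl E l" using z xs(4) by (simp add: insert_commute)
  qed
qed

lemma edge_inj: assumes "z \<in> V" "z \<noteq> r" "z' \<in> V" "z' \<noteq> r" "{z, par z} = {z', par z'}"
  shows "z = z'"
proof (rule ccontr)
  assume ne: "z \<noteq> z'"
  then have e: "z = par z'" "z' = par z" using assms(5) by (auto simp: doubleton_eq_iff)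
  have "dep z = dep z' - 1" using e(1) par_props(3)[OF assms(3,4)] by simp
  moreover have "dep z' = dep z - 1" using e(2) par_props(3)[OF assms(1,2)] by simp
  moreover have "0 < dep z" "0 < dep z'" using dep_pos assms by auto
  ultimately show False by simp
qed

lemma up_top_bot: assumes "t \<noteq> b" "anc t b" "b \<in> V"
  shows "up_top E r {t,b} = t" "up_bot E r {t,b} = b"
proof -
  have uq: "t' = t \<and> b' = b" if "{t,b} = {t',b'}" "t' \<noteq> b'" "anc t' b'" for t' b'
  proof -
    have "(t' = t \<and> b' = b) \<or> (t' = b \<and> b' = t)" using that(1) by (auto simp: doubleton_eq_iff)
    moreover have "\<not> (t' = b \<and> b' = t)"
    proof
      assume "t' = b \<and> b' = t"
      then have "anc b t" using that by simp
      then show False using anc_antisym assms by blast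
    qed
    ultimately show ?thesis by blast
  qed
  show "up_top E r {t,b} = t" unfolding up_top_def
    by (rule the_equality) (use assms uq in blast)+
  show "up_bot E r {t,b} = b" unfolding up_bot_def
    by (rule the_equality) (use assms uq in blast)+
qed

lemma up_link_facts: assumes "t \<noteq> b" "anc t b" "b \<in> V"
  shows "is_link {t,b}" "Vl E {t,b} = {z. anc t z \<and> anc z b}" "ap {t,b} = t"
proof -
  have tV: "t \<in> V" using anc_V assms by blast
  show l: "is_link {t,b}" using tV assms unfolding is_link_def by blast
  show vs: "Vl E {t,b} = {z. anc t z \<and> anc z b}" using Vl_pair tV assms set_tp_vertical by simp
  have "t \<in> Vl E {t,b}" using vs anc_refl tV assms by simp
  then have "anc (ap {t,b}) t" using apex_anc l by blast
  moreover have "anc t (ap {t,b})" using apex_min(1)[OF l] vs by simp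
  ultimately show "ap {t,b} = t" using anc_antisym tV by blast
qed

end


context tree_r begin

definition ln :: "'v \<Rightarrow> nat \<Rightarrow> 'v" where "ln b d = tp r b ! (d - 1)"
definition eb :: "'v \<Rightarrow> nat \<Rightarrow> 'v set" where "eb b d = {ln b d, par (ln b d)}"

lemma ln_props: assumes b: "b \<in> V" and d: "1 \<le> d" "d \<le> dep b"
  shows "anc (ln b d) b" "dep (ln b d) = d" "ln b d \<in> V"
proof -
  have l: "length (tp r b) = dep b" by (simp add: depth_def)
  have i: "d - 1 < length (tp r b)" using d l by simp
  show a: "anc (ln b d) b" unfolding ln_def ancestor_def using i by simp
  have "tp r (ln b d) = take (Suc (d - 1)) (tp r b)" unfolding ln_def using tp_prefix[OF b i] .
  then show "dep (ln b d) = d" using d by (simp add: depth_def)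
  show "ln b d \<in> V" using anc_V[OF b a] .
qed

lemma ln_of: "b \<in> V \<Longrightarrow> anc z b \<Longrightarrow> ln b (dep z) = z"
  unfolding ln_def using anc_nth by blast

lemma ln_anc: assumes b: "b \<in> V" and d: "1 \<le> d1" "d1 \<le> d2" "d2 \<le> dep b"
  shows "anc (ln b d1) (ln b d2)"
proof -
  have "anc (ln b d1) b" "anc (ln b d2) b" "dep (ln b d1) = d1" "dep (ln b d2) = d2"
    using ln_props[OF b] d by auto
  then show ?thesis using anc_lin_dep[OF _ _ b] d by simp
qed

lemma ln_ne_r: assumes b: "b \<in> V" and d: "2 \<le> d" "d \<le> dep b" shows "ln b d \<noteq> r"
  using ln_props[OF b, of d] d dep_r by auto

lemma ln_par: assumes b: "b \<in> V" and d: "2 \<le> d" "d \<le> dep b"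
  shows "par (ln b d) = ln b (d - 1)"
proof -
  let ?z = "ln b d"
  have z: "anc ?z b" "dep ?z = d" "?z \<in> V" using ln_props[OF b] d by auto
  have zr: "?z \<noteq> r" using ln_ne_r b d by blast
  have "anc (par ?z) b" using anc_trans[OF par_props(2)[OF z(3) zr] z(1) b] .
  moreover have "dep (par ?z) = d - 1" using par_props(3)[OF z(3) zr] z by simp
  ultimately show ?thesis using ln_of[OF b] by metis
qed

lemma anc_strict_dep: assumes "anc x y" "x \<noteq> y" "y \<in> V" shows "dep x < dep y"
  using anc_dep_le[OF assms(3,1)] anc_eq[OF assms(3,1)] assms(2) by fastforce

lemma dep_inj_anc: assumes "anc x v" "anc y v" "v \<in> V" "dep x = dep y" shows "x = y"
  using anc_lin_dep[OF assms(1-3)] anc_eq assms anc_V by (metis order_refl)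

end

locale setting = tree_r V E r for V :: "'v set" and E r +
  fixes L F U :: "'v set set" and Fu :: "'v set \<Rightarrow> 'v set set"
  assumes links: "L \<subseteq> {{a, b} | a b. a \<in> V \<and> b \<in> V \<and> a \<noteq> b}"
    and F_sub: "F \<subseteq> L"
    and F_sol: "(\<Union>x\<in>F. Pl E x) = E"
    and U_sub: "U \<subseteq> L_up E r L"
    and U_disj: "\<forall>u1\<in>U. \<forall>u2\<in>U. u1 \<noteq> u2 \<longrightarrow> Pl E u1 \<inter> Pl E u2 = {}"
    and Fu_choice: "\<forall>u\<in>L_up E r L. Fu_ok E r F u (Fu u)"
begin

abbreviation "Lup \<equiv> L_up E r L"

lemma L_link: "x \<in> L \<Longrightarrow> is_link x"
  using links unfolding is_link_def by blast

lemma F_link: "x \<in> F \<Longrightarrow> is_link x"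
  using F_sub L_link by blast

lemma finL: "finite L"
proof -
  have "L \<subseteq> Pow V" using links by auto
  then show ?thesis using finV finite_subset by blast
qed

lemma finF: "finite F" using finL F_sub finite_subset by blast
lemma U_L: "U \<subseteq> L" using U_sub unfolding L_up_def by blast
lemma finU: "finite U" using finL U_L by (rule finite_subset[rotated])

lemma upE: assumes "u \<in> Lup"
  obtains t b where "u = {t,b}" "t \<noteq> b" "anc t b" "b \<in> V" "t \<in> V" "up_top E r u = t" "up_bot E r u = b"
proof -
  obtain t b where tb: "u = {t,b}" "t \<noteq> b" "anc t b" using assms unfolding L_up_def is_up_link_def by blast
  have "u \<in> L" using assms unfolding L_up_def by blast
  then have "b \<in> V" using links tb by (auto simp: doubleton_eq_iff)
  moreover then have "t \<in> V" using anc_V tb by blast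
  ultimately show ?thesis using that tb up_top_bot by blast
qed

lemma ap_V: "x \<in> F \<Longrightarrow> ap x \<in> V"
  using apex_min Vl_sub F_link by blast

lemma Pl_E: assumes "is_link x" shows "Pl E x \<subseteq> E"
proof
  fix e assume "e \<in> Pl E x"
  then obtain z where z: "z \<in> Vl E x" "z \<noteq> r" "e = {z, par z}" using Pl_char assms by blast
  have "z \<in> V" using Vl_sub assms z by blast
  then show "e \<in> E" using par_props z by (simp add: insert_commute)
qed

definition n0u where "n0u u = Suc (dep (up_top E r u))"
definition n1u where "n1u u = dep (up_bot E r u)"
definition Du where "Du u x = {d. n0u u \<le> d \<and> d \<le> n1u u \<and> eb (up_bot E r u) d \<in> Pl E x}"

lemma Pl_up: assumes "u = {t,b}" "t \<noteq> b" "anc t b" "b \<in> V"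
  shows "e \<in> Pl E u \<longleftrightarrow> (\<exists>d. dep t < d \<and> d \<le> dep b \<and> e = eb b d)"
proof -
  note uf = up_link_facts[OF assms(2-4)]
  have tV: "t \<in> V" using anc_V assms by blast
  have dt: "1 \<le> dep t" using dep_pos tV by (simp add: Suc_le_eq)
  show ?thesis
  proof
    assume "e \<in> Pl E u"
    then obtain z where z: "z \<in> Vl E u" "z \<noteq> ap u" "z \<noteq> r" "e = {z, par z}" using Pl_char uf assms by blast
    have zz: "anc t z" "anc z b" "z \<noteq> t" using z uf assms by auto
    have zV: "z \<in> V" using anc_V zz assms by blast
    have "dep t < dep z" using anc_strict_dep zz zV by blast
    moreover have "dep z \<le> dep b" using anc_dep_le zz assms by blast
    moreover have "z = ln b (dep z)" using ln_of zz assms by simp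
    ultimately show "\<exists>d. dep t < d \<and> d \<le> dep b \<and> e = eb b d" using z(4) unfolding eb_def by metis
  next
    assume "\<exists>d. dep t < d \<and> d \<le> dep b \<and> e = eb b d"
    then obtain d where d: "dep t < d" "d \<le> dep b" "e = eb b d" by blast
    let ?z = "ln b d"
    have zp: "anc ?z b" "dep ?z = d" using ln_props assms d dt by auto
    have "ln b (dep t) = t" using ln_of assms by blast
    then have "anc t ?z" using ln_anc[OF assms(4) dt, of d] d by simp
    moreover have "?z \<noteq> t" using zp d by auto
    moreover have "?z \<noteq> r" using ln_ne_r assms d dt by simp
    ultimately show "e \<in> Pl E u" using Pl_char uf assms zp d unfolding eb_def by auto
  qed
qed

lemma D_char: assumes x: "is_link x" and b: "b \<in> V" and d: "2 \<le> d" "d \<le> dep b"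
  shows "eb b d \<in> Pl E x \<longleftrightarrow> ln b d \<in> Vl E x \<and> ln b d \<noteq> ap x"
proof -
  have zV: "ln b d \<in> V" "ln b d \<noteq> r" using ln_props ln_ne_r b d by auto
  show ?thesis
  proof
    assume "eb b d \<in> Pl E x"
    then obtain z where z: "z \<in> Vl E x" "z \<noteq> ap x" "z \<noteq> r" "eb b d = {z, par z}" using Pl_char x by blast
    have "z \<in> V" using Vl_sub x z by blast
    then have "z = ln b d" using edge_inj zV z unfolding eb_def by metis
    then show "ln b d \<in> Vl E x \<and> ln b d \<noteq> ap x" using z by simp
  next
    assume "ln b d \<in> Vl E x \<and> ln b d \<noteq> ap x"
    then show "eb b d \<in> Pl E x" using Pl_char x zV unfolding eb_def by blast
  qed
qed

end


context setting begin

abbreviation "Dc u \<equiv> icover.consec (n0u u) (n1u u) (Fu u) (Du u)"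
abbreviation "Dp u \<equiv> icover.precv (n0u u) (n1u u) (Fu u) (Du u)"
abbreviation "DPv u \<equiv> icover.Pv (n0u u) (n1u u) (Fu u) (Du u)"
abbreviation "Dlo u \<equiv> icover.lo (Du u)"
abbreviation "Dhi u \<equiv> icover.hi (Du u)"

lemma Fu_props: assumes "u \<in> Lup"
  shows "Fu u \<subseteq> Bset E r F (v_of E r F u)" "Pl E u \<subseteq> (\<Union>l\<in>Fu u. Pl E l)"
    "\<And>S'. S' \<subset> Fu u \<Longrightarrow> \<not> Pl E u \<subseteq> (\<Union>l\<in>S'. Pl E l)"
  using Fu_choice assms unfolding Fu_ok_def by blast+

lemma Fu_F: "u \<in> Lup \<Longrightarrow> Fu u \<subseteq> F"
  using Fu_props(1) unfolding Bset_def by blast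

lemma icov: assumes u: "u \<in> Lup" shows "icover (n0u u) (n1u u) (Fu u) (Du u)"
proof -
  obtain t b where tb: "u = {t,b}" "t \<noteq> b" "anc t b" "b \<in> V" "t \<in> V" "up_top E r u = t" "up_bot E r u = b"
    using upE u by blast
  have n: "n0u u = Suc (dep t)" "n1u u = dep b" using tb by (auto simp: n0u_def n1u_def)
  have dt: "1 \<le> dep t" using dep_pos tb by (simp add: Suc_le_eq)
  have Dd: "Du u x = {d. Suc (dep t) \<le> d \<and> d \<le> dep b \<and> eb b d \<in> Pl E x}" for x
    using n tb by (simp add: Du_def)
  show ?thesis
  proof
    show "finite (Fu u)" using Fu_F u finF finite_subset by blast
    show "\<And>x. x \<in> Fu u \<Longrightarrow> Du u x \<subseteq> {n0u u..n1u u}" unfolding Du_def by auto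
  next
    fix x i j k assume x: "x \<in> Fu u" and ijk: "i \<in> Du u x" "k \<in> Du u x" "i \<le> j" "j \<le> k"
    have xl: "is_link x" using x Fu_F u F_link by blast
    have r: "2 \<le> i" "k \<le> dep b" using ijk Dd dt by auto
    have ci: "ln b i \<in> Vl E x" "ln b i \<noteq> ap x" using ijk(1) Dd D_char[OF xl tb(4)] r by auto
    have ck: "ln b k \<in> Vl E x" using ijk Dd D_char[OF xl tb(4)] r by auto
    have a1: "anc (ln b i) (ln b j)" using ln_anc[OF tb(4)] r ijk by simp
    have a2: "anc (ln b j) (ln b k)" using ln_anc[OF tb(4)] r ijk by simp
    have cj: "ln b j \<in> Vl E x" using link_convex[OF xl ci(1) ck a1 a2] .
    have nj: "ln b j \<noteq> ap x"
    proof
      assume e: "ln b j = ap x"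
      have "anc (ln b j) (ln b i)" using apex_anc[OF xl ci(1)] e by simp
      then have "j \<le> i" using anc_dep_le ln_props[OF tb(4)] r ijk
        by (metis le_trans one_le_numeral)
      then have "i = j" using ijk by simp
      then show False using ci e by simp
    qed
    show "j \<in> Du u x" using Dd cj nj D_char[OF xl tb(4)] r ijk by auto
  next
    show "{n0u u..n1u u} \<subseteq> \<Union>(Du u ` Fu u)"
    proof
      fix d assume d: "d \<in> {n0u u..n1u u}"
      then have "dep t < d" "d \<le> dep b" using n by auto
      then have "eb b d \<in> Pl E u" using Pl_up[OF tb(1-4)] by blast
      then obtain x where "x \<in> Fu u" "eb b d \<in> Pl E x" using Fu_props(2)[OF u] by blast
      then show "d \<in> \<Union>(Du u ` Fu u)" using d n Dd by auto
    qed
  next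
    fix S' assume S': "S' \<subset> Fu u"
    show "\<not> {n0u u..n1u u} \<subseteq> \<Union>(Du u ` S')"
    proof
      assume c: "{n0u u..n1u u} \<subseteq> \<Union>(Du u ` S')"
      have "Pl E u \<subseteq> (\<Union>l\<in>S'. Pl E l)"
      proof
        fix e assume "e \<in> Pl E u"
        then obtain d where d: "dep t < d" "d \<le> dep b" "e = eb b d" using Pl_up[OF tb(1-4)] by blast
        then have "d \<in> {n0u u..n1u u}" using n by auto
        then obtain x where "x \<in> S'" "d \<in> Du u x" using c by blast
        then show "e \<in> (\<Union>l\<in>S'. Pl E l)" using d Dd by auto
      qed
      then show False using Fu_props(3)[OF u S'] by blast
    qed
  qed
qed

lemma vof: assumes u: "u \<in> Lup"
  shows "anc (v_of E r F u) (up_top E r u)"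
    "Pl E u \<subseteq> (\<Union>l\<in>Bset E r F (v_of E r F u). Pl E l)"
    "\<And>w. anc w (up_top E r u) \<Longrightarrow> Pl E u \<subseteq> (\<Union>l\<in>Bset E r F w. Pl E l) \<Longrightarrow> dep w \<le> dep (v_of E r F u)"
proof -
  obtain t b where tb: "u = {t,b}" "t \<noteq> b" "anc t b" "b \<in> V" "t \<in> V" "up_top E r u = t" "up_bot E r u = b"
    using upE u by blast
  let ?P = "\<lambda>v. anc v (up_top E r u) \<and> Pl E u \<subseteq> (\<Union>l\<in>Bset E r F v. Pl E l)"
  have "Bset E r F r = F" using ap_V anc_root unfolding Bset_def by blast
  moreover have "Pl E u \<subseteq> E" using Pl_E up_link_facts(1)[OF tb(2-4)] tb(1) by blast
  ultimately have Pr: "?P r" using anc_root tb F_sol by simp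
  have bd: "\<forall>y. ?P y \<longrightarrow> dep y < Suc (dep t)" using anc_dep_le tb by (simp add: less_Suc_eq_le)
  note am = arg_max_nat_lemma[of ?P r dep, OF Pr bd]
  have vd: "v_of E r F u = arg_max dep ?P" unfolding v_of_def by simp
  show "anc (v_of E r F u) (up_top E r u)" using am vd by simp
  show "Pl E u \<subseteq> (\<Union>l\<in>Bset E r F (v_of E r F u). Pl E l)" using am vd by simp
  show "\<And>w. anc w (up_top E r u) \<Longrightarrow> Pl E u \<subseteq> (\<Union>l\<in>Bset E r F w. Pl E l) \<Longrightarrow> dep w \<le> dep (v_of E r F u)"
    using am vd by simp
qed

lemma Pul_iff: assumes u: "u \<in> Lup" and tb: "u = {t,b}" "t \<noteq> b" "anc t b" "b \<in> V" "up_top E r u = t" "up_bot E r u = b"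
  and d: "dep t < d" "d \<le> dep b"
  shows "eb b d \<in> Pul E u (Fu u) l \<longleftrightarrow> d \<in> DPv u l"
proof -
  have n: "n0u u = Suc (dep t)" "n1u u = dep b" using tb by (auto simp: n0u_def n1u_def)
  have inu: "eb b d \<in> Pl E u" using Pl_up[OF tb(1-4)] d by blast
  have "eb b d \<in> Pl E l' \<longleftrightarrow> d \<in> Du u l'" for l' using d n tb by (auto simp: Du_def)
  then show ?thesis using inu d n unfolding Pul_def icover.Pv_def[OF icov[OF u]] by auto
qed

lemma prec_iff: assumes u: "u \<in> Lup"
  shows "prec_u E r u (Fu u) l1 l2 \<longleftrightarrow> Dp u l1 l2"
proof -
  obtain t b where tb: "u = {t,b}" "t \<noteq> b" "anc t b" "b \<in> V" "t \<in> V" "up_top E r u = t" "up_bot E r u = b"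
    using upE u by blast
  have n: "n0u u = Suc (dep t)" "n1u u = dep b" using tb by (auto simp: n0u_def n1u_def)
  have dt: "1 \<le> dep t" using dep_pos tb by (simp add: Suc_le_eq)
  have dtb: "dep t \<le> dep b" using anc_dep_le tb by blast
  let ?xs = "tp t b"
  have xs: "?xs = drop (dep t - 1) (tp r b)" using tp_vertical tb by blast
  have len: "length ?xs = Suc (dep b - dep t)" using xs dt dtb by (simp add: depth_def)
  have nth: "?xs ! i = ln b (dep t + i)" if "i < length ?xs" for i
    using that xs dt by (simp add: ln_def add.commute)
  have edge: "{?xs ! i, ?xs ! Suc i} = eb b (dep t + Suc i)" if "Suc i < length ?xs" for i
  proof -
    have "par (ln b (dep t + Suc i)) = ln b (dep t + Suc i - 1)"
      using ln_par[OF tb(4)] that len dt by simp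
    then show ?thesis using nth that by (simp add: eb_def insert_commute)
  qed
  have Pv_rng: "d \<in> DPv u l \<Longrightarrow> dep t < d \<and> d \<le> dep b" for d l
    using n unfolding icover.Pv_def[OF icov[OF u]] by auto
  have pu: "prec_u E r u (Fu u) l1 l2 \<longleftrightarrow>
     (\<forall>i j. Suc i < length ?xs \<and> Suc j < length ?xs \<and> {?xs ! i, ?xs ! Suc i} \<in> Pul E u (Fu u) l1
        \<and> {?xs ! j, ?xs ! Suc j} \<in> Pul E u (Fu u) l2 \<longrightarrow> i < j)"
    unfolding prec_u_def Let_def using tb(6,7) by simp
  show ?thesis
  proof
    assume p: "prec_u E r u (Fu u) l1 l2"
    show "Dp u l1 l2" unfolding icover.precv_def[OF icov[OF u]]
    proof (intro ballI)
      fix d1 d2 assume d1: "d1 \<in> DPv u l1" and d2: "d2 \<in> DPv u l2"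
      have r1: "dep t < d1" "d1 \<le> dep b" and r2: "dep t < d2" "d2 \<le> dep b" using Pv_rng d1 d2 by auto
      define i where "i = d1 - Suc (dep t)"
      define j where "j = d2 - Suc (dep t)"
      have ij: "Suc i < length ?xs" "Suc j < length ?xs" "dep t + Suc i = d1" "dep t + Suc j = d2"
        using r1 r2 len by (auto simp: i_def j_def)
      have "{?xs ! i, ?xs ! Suc i} \<in> Pul E u (Fu u) l1"
        using edge[OF ij(1)] ij(3) Pul_iff[OF u tb(1-4,6,7) r1] d1 by simp
      moreover have "{?xs ! j, ?xs ! Suc j} \<in> Pul E u (Fu u) l2"
        using edge[OF ij(2)] ij(4) Pul_iff[OF u tb(1-4,6,7) r2] d2 by simp
      ultimately have "i < j" using p pu ij by blast
      then show "d1 < d2" using ij by simp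
    qed
  next
    assume p: "Dp u l1 l2"
    show "prec_u E r u (Fu u) l1 l2" unfolding pu
    proof (intro allI impI)
      fix i j assume a: "Suc i < length ?xs \<and> Suc j < length ?xs \<and> {?xs ! i, ?xs ! Suc i} \<in> Pul E u (Fu u) l1
        \<and> {?xs ! j, ?xs ! Suc j} \<in> Pul E u (Fu u) l2"
      have r1: "dep t < dep t + Suc i" "dep t + Suc i \<le> dep b" using a len by auto
      have r2: "dep t < dep t + Suc j" "dep t + Suc j \<le> dep b" using a len by auto
      have "dep t + Suc i \<in> DPv u l1" using a edge Pul_iff[OF u tb(1-4,6,7) r1] by metis
      moreover have "dep t + Suc j \<in> DPv u l2" using a edge Pul_iff[OF u tb(1-4,6,7) r2] by metis
      ultimately have "dep t + Suc i < dep t + Suc j" using p unfolding icover.precv_def[OF icov[OF u]] by blast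
      then show "i < j" by simp
    qed
  qed
qed

lemma A_u_iff: assumes u: "u \<in> Lup"
  shows "(x, y) \<in> A_u E r u (Fu u) \<longleftrightarrow> Dc u x y"
  unfolding A_u_def icover.consec_def[OF icov[OF u]] using prec_iff[OF u] by simp

end


context setting begin

abbreviation "tu u \<equiv> up_top E r u"
abbreviation "bu u \<equiv> up_bot E r u"

lemma upF: assumes u: "u \<in> Lup"
  shows "u = {tu u, bu u}" "tu u \<noteq> bu u" "anc (tu u) (bu u)" "bu u \<in> V" "tu u \<in> V"
    "n0u u = Suc (dep (tu u))" "n1u u = dep (bu u)" "is_link u" "1 \<le> dep (tu u)"
proof -
  obtain t b where tb: "u = {t,b}" "t \<noteq> b" "anc t b" "b \<in> V" "t \<in> V" "up_top E r u = t" "up_bot E r u = b"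
    using upE u by blast
  then show "u = {tu u, bu u}" "tu u \<noteq> bu u" "anc (tu u) (bu u)" "bu u \<in> V" "tu u \<in> V" by auto
  show "n0u u = Suc (dep (tu u))" "n1u u = dep (bu u)" by (auto simp: n0u_def n1u_def)
  show "is_link u" using up_link_facts tb by blast
  show "1 \<le> dep (tu u)" using dep_pos tb by (simp add: Suc_le_eq)
qed

lemma lo_facts: assumes u: "u \<in> Lup" and x: "x \<in> Fu u"
  shows "Suc (dep (tu u)) \<le> Dlo u x" "Dlo u x \<le> dep (bu u)"
    "ln (bu u) (Dlo u x) \<in> Vl E x" "ln (bu u) (Dlo u x) \<noteq> ap x"
    "anc (ap x) (ln (bu u) (Dlo u x - 1))"
proof -
  interpret ic: icover "n0u u" "n1u u" "Fu u" "Du u" using icov[OF u] .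
  note U = upF[OF u]
  have xl: "is_link x" using x Fu_F u F_link by blast
  have lo: "ic.lo x \<in> Du u x" using ic.D_eq[OF x] by auto
  then show r1: "Suc (dep (tu u)) \<le> Dlo u x" "Dlo u x \<le> dep (bu u)" using U by (auto simp: Du_def)
  have c: "ln (bu u) (Dlo u x) \<in> Vl E x \<and> ln (bu u) (Dlo u x) \<noteq> ap x"
    using lo D_char[OF xl U(4)] r1 U(9) by (simp add: Du_def)
  then show "ln (bu u) (Dlo u x) \<in> Vl E x" "ln (bu u) (Dlo u x) \<noteq> ap x" by auto
  have zV: "ln (bu u) (Dlo u x) \<in> V" using ln_props U r1 by simp
  have "anc (ap x) (ln (bu u) (Dlo u x))" using apex_anc xl c by blast
  moreover have "ap x \<noteq> ln (bu u) (Dlo u x)" using c by metis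
  ultimately have "anc (ap x) (par (ln (bu u) (Dlo u x)))" using anc_par[OF zV] by blast
  then show "anc (ap x) (ln (bu u) (Dlo u x - 1))" using ln_par[OF U(4)] r1 U(9) by simp
qed

lemma ap_lo: assumes u: "u \<in> Lup" and x: "x \<in> Fu u" and gt: "n0u u < Dlo u x"
  shows "ap x = ln (bu u) (Dlo u x - 1)" "dep (ap x) = Dlo u x - 1"
    "anc (tu u) (ap x)" "tu u \<noteq> ap x" "anc (ap x) (bu u)"
proof -
  interpret ic: icover "n0u u" "n1u u" "Fu u" "Du u" using icov[OF u] .
  note U = upF[OF u]
  note lf = lo_facts[OF u x]
  have xl: "is_link x" using x Fu_F u F_link by blast
  let ?b = "bu u" and ?d = "Dlo u x - 1"
  have dr: "2 \<le> ?d" "?d \<le> dep ?b" "Suc (dep (tu u)) \<le> ?d" using gt U lf by auto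
  have zV: "ln ?b ?d \<in> V" using ln_props U dr by simp
  have "ln ?b ?d \<in> Vl E x"
  proof -
    have "anc (ln ?b ?d) (ln ?b (Dlo u x))" using ln_anc[OF U(4)] dr lf by simp
    then show ?thesis using link_convex[OF xl apex_min(1)[OF xl] lf(3) lf(5)] by blast
  qed
  moreover have "\<not> (ln ?b ?d \<in> Vl E x \<and> ln ?b ?d \<noteq> ap x)"
  proof
    assume "ln ?b ?d \<in> Vl E x \<and> ln ?b ?d \<noteq> ap x"
    then have "?d \<in> Du u x" using D_char[OF xl U(4)] dr U by (simp add: Du_def)
    then have "ic.lo x \<le> ?d" using ic.D_eq[OF x] by auto
    then show False using gt by simp
  qed
  ultimately show ap: "ap x = ln ?b ?d" by metis
  show "dep (ap x) = Dlo u x - 1" using ap ln_props U dr by simp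
  have "ln ?b (dep (tu u)) = tu u" using ln_of U by blast
  then have "anc (tu u) (ln ?b ?d)" using ln_anc[OF U(4) U(9), of ?d] dr by simp
  then show "anc (tu u) (ap x)" using ap by simp
  show "tu u \<noteq> ap x" using ap ln_props[OF U(4), of ?d] dr by auto
  show "anc (ap x) (bu u)" using ap ln_props[OF U(4), of ?d] dr by auto
qed

lemma ap_first: assumes u: "u \<in> Lup" and x: "x \<in> Fu u" and eq: "Dlo u x = n0u u"
  shows "anc (ap x) (tu u)"
proof -
  note U = upF[OF u]
  have "ln (bu u) (Dlo u x - 1) = tu u" using eq U ln_of by simp
  then show ?thesis using lo_facts(5)[OF u x] by simp
qed

lemma consec_facts: assumes u: "u \<in> Lup" and c: "Dc u x y"
  shows "x \<in> Fu u" "y \<in> Fu u" "x \<in> F" "y \<in> F"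
    "ap y \<in> Vl E x" "anc (ap x) (ap y)" "ap x \<noteq> ap y"
    "ap y \<noteq> r" "{ap y, par (ap y)} \<in> Pl E x" "{ap y, par (ap y)} \<in> Pl E u"
    "anc (tu u) (ap y)" "tu u \<noteq> ap y" "anc (ap y) (bu u)"
    "n0u u < Dlo u y"
proof -
  interpret ic: icover "n0u u" "n1u u" "Fu u" "Du u" using icov[OF u] .
  note U = upF[OF u]
  have xy: "x \<in> Fu u" "y \<in> Fu u" "x \<noteq> y" "Dp u x y" using c unfolding ic.consec_def by auto
  then show "x \<in> Fu u" "y \<in> Fu u" "x \<in> F" "y \<in> F" using Fu_F u by auto
  have xl: "is_link x" using xy Fu_F u F_link by blast
  have l: "Dlo u x < Dlo u y" using ic.precv_iff xy by blast
  have l0: "n0u u \<le> Dlo u x" using ic.D_eq[OF xy(1)] by simp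
  show gt: "n0u u < Dlo u y" using l l0 by simp
  note apy = ap_lo[OF u xy(2) gt]
  have g: "Dlo u y \<le> Suc (Dhi u x)" using ic.consec_gap c by blast
  have "Dlo u y - 1 \<in> Du u x" using ic.D_eq[OF xy(1)] l g by auto
  then have inx: "eb (bu u) (Dlo u y - 1) \<in> Pl E x" by (simp add: Du_def)
  have dr: "2 \<le> Dlo u y - 1" "Dlo u y - 1 \<le> dep (bu u)" using gt U lo_facts[OF u xy(2)] by auto
  have cx: "ln (bu u) (Dlo u y - 1) \<in> Vl E x" "ln (bu u) (Dlo u y - 1) \<noteq> ap x"
    using D_char[OF xl U(4) dr] inx by auto
  then show apyx: "ap y \<in> Vl E x" using apy by simp
  show "anc (ap x) (ap y)" using apex_anc xl apyx by blast
  show "ap x \<noteq> ap y" using cx apy by simp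
  show "ap y \<noteq> r" using ln_ne_r U dr apy by simp
  show "{ap y, par (ap y)} \<in> Pl E x" using inx apy by (simp add: eb_def)
  have "dep (tu u) < Dlo u y - 1" using gt U by simp
  then have "eb (bu u) (Dlo u y - 1) \<in> Pl E u" using Pl_up[OF U(1-4)] dr by blast
  then show "{ap y, par (ap y)} \<in> Pl E u" using apy by (simp add: eb_def)
  show "anc (tu u) (ap y)" "tu u \<noteq> ap y" "anc (ap y) (bu u)" using apy by auto
qed

lemma first_apex_above: assumes u: "u \<in> Lup" and c: "Dc u g q" and nb: "\<not> (anc (tu u) (ap g) \<and> tu u \<noteq> ap g)"
  shows "Dlo u g = n0u u"
proof -
  interpret ic: icover "n0u u" "n1u u" "Fu u" "Du u" using icov[OF u] .
  have g: "g \<in> Fu u" using c unfolding ic.consec_def by auto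
  have "n0u u \<le> Dlo u g" using ic.D_eq[OF g] by simp
  moreover have "\<not> n0u u < Dlo u g" using ap_lo(3,4)[OF u g] nb by blast
  ultimately show ?thesis by simp
qed

end


context setting begin

abbreviation "arcs \<equiv> dep_arcs E r Fu U"
definition R where "R = {(x,y). \<exists>u. (u,x,y) \<in> arcs}"

lemma arcD: assumes "(u,x,y) \<in> arcs" shows "u \<in> U" "u \<in> Lup" "Dc u x y"
proof -
  have a: "u \<in> U" "(x,y) \<in> A_u E r u (Fu u)" using assms unfolding dep_arcs_def by auto
  then show "u \<in> U" "u \<in> Lup" using U_sub by auto
  then show "Dc u x y" using A_u_iff a by blast
qed

lemma R_facts: assumes "(x,y) \<in> R"
  shows "x \<in> F" "y \<in> F" "ap y \<in> Vl E x" "anc (ap x) (ap y)" "ap x \<noteq> ap y" "dep (ap x) < dep (ap y)"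
proof -
  obtain u where a: "(u,x,y) \<in> arcs" using assms unfolding R_def by blast
  note c = consec_facts[OF arcD(2,3)[OF a]]
  show "x \<in> F" "y \<in> F" "ap y \<in> Vl E x" "anc (ap x) (ap y)" "ap x \<noteq> ap y" using c by auto
  show "dep (ap x) < dep (ap y)" using anc_strict_dep c ap_V by blast
qed

lemma Rs: assumes "(x,y) \<in> R\<^sup>*" "x \<in> F" shows "y \<in> F" "anc (ap x) (ap y)" "dep (ap x) \<le> dep (ap y)"
proof -
  have "y \<in> F \<and> anc (ap x) (ap y)" using assms(1)
  proof (induction rule: rtrancl_induct)
    case base then show ?case using assms(2) anc_refl ap_V by blast
  next
    case (step y z)
    then show ?case using R_facts[OF step(2)] anc_trans ap_V by blast
  qed
  then show "y \<in> F" "anc (ap x) (ap y)" by auto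
  then show "dep (ap x) \<le> dep (ap y)" using anc_dep_le ap_V by blast
qed

lemma Rp: assumes "(x,y) \<in> R\<^sup>+" shows "dep (ap x) < dep (ap y)" "x \<in> F" "y \<in> F"
proof -
  show "dep (ap x) < dep (ap y)" using assms
  proof (induction rule: trancl_induct)
    case (base y) then show ?case using R_facts by blast
  next
    case (step y z) then show ?case using R_facts(6)[OF step(2)] by simp
  qed
  show "x \<in> F" "y \<in> F" using assms by (induction rule: trancl_induct) (auto dest: R_facts)
qed

lemma Rp_neq: "(x,y) \<in> R\<^sup>+ \<Longrightarrow> x \<noteq> y"
  using Rp by fastforce

lemma succ_u: assumes "(u,x,y) \<in> arcs" "(u',x,y') \<in> arcs" "y \<noteq> y'" shows "u \<noteq> u'"
proof
  assume e: "u = u'"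
  have u: "u \<in> Lup" using arcD assms by blast
  interpret ic: icover "n0u u" "n1u u" "Fu u" "Du u" using icov[OF u] .
  have "Dc u x y" "Dc u x y'" using arcD assms e by auto
  then show False using ic.consec_unique_succ assms(3) by blast
qed

lemma pred_u: assumes "(u,x,y) \<in> arcs" "(u',x',y) \<in> arcs" shows "u = u'" "x = x'"
proof -
  have u: "u \<in> Lup" "u \<in> U" and u': "u' \<in> Lup" "u' \<in> U" using arcD assms by auto
  have "{ap y, par (ap y)} \<in> Pl E u" using consec_facts(10)[OF u(1) arcD(3)[OF assms(1)]] .
  moreover have "{ap y, par (ap y)} \<in> Pl E u'" using consec_facts(10)[OF u'(1) arcD(3)[OF assms(2)]] .
  ultimately show e: "u = u'" using U_disj u u' by blast
  interpret ic: icover "n0u u" "n1u u" "Fu u" "Du u" using icov[OF u(1)] .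
  have "Dc u x y" "Dc u x' y" using arcD assms e by auto
  then show "x = x'" using ic.consec_unique_pred by blast
qed

lemma R_pred: "(x,y) \<in> R \<Longrightarrow> (x',y) \<in> R \<Longrightarrow> x = x'"
  unfolding R_def using pred_u by blast

lemma Pl_upv: assumes u: "u \<in> Lup" and z: "anc (tu u) z" "anc z (bu u)" "z \<noteq> tu u"
  shows "{z, par z} \<in> Pl E u"
proof -
  note U = upF[OF u]
  note uf = up_link_facts[OF U(2-4)]
  have zV: "z \<in> V" using anc_V z U by blast
  have zr: "z \<noteq> r"
  proof
    assume "z = r"
    then have "anc (tu u) r" using z by simp
    then have "tu u = r" using anc_antisym[OF _ anc_root[OF U(5)] rV] by blast
    then show False using z \<open>z = r\<close> by simp
  qed
  have "z \<in> Vl E u" using uf U z by simp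
  moreover have "z \<noteq> ap u" using uf U z by simp
  ultimately show ?thesis using Pl_char[OF U(8)] zr by blast
qed

lemma final:
  assumes as: "(us, g, s) \<in> arcs" and aq: "(uq, g, q) \<in> arcs" and sq: "s \<noteq> q"
    and aps: "anc (ap s) (ap q)" "ap s \<noteq> ap q"
    and sz: "(s, z) \<in> R\<^sup>*" and zq: "anc (ap z) (ap q)" and qz: "ap q \<in> Vl E z"
  shows False
proof -
  have usq: "us \<noteq> uq" using succ_u as aq sq by blast
  have us: "us \<in> Lup" "us \<in> U" and uq: "uq \<in> Lup" "uq \<in> U" using arcD as aq by auto
  interpret ic: icover "n0u uq" "n1u uq" "Fu uq" "Du uq" using icov[OF uq(1)] .
  note cs = consec_facts[OF us(1) arcD(3)[OF as]]
  note cq = consec_facts[OF uq(1) arcD(3)[OF aq]]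
  note U = upF[OF uq(1)]
  let ?t = "tu uq" and ?b = "bu uq"
  have qV: "ap q \<in> V" using ap_V cq by blast
  have sF: "s \<in> F" using cs by blast
  have zF: "z \<in> F" and asz: "anc (ap s) (ap z)" using Rs[OF sz sF] by auto
  have st: "anc (ap s) ?t"
  proof (rule ccontr)
    assume n: "\<not> anc (ap s) ?t"
    then have "anc ?t (ap s)" using anc_lin[OF cq(11) aps(1) qV] by blast
    moreover have "anc (ap s) ?b" using anc_trans[OF aps(1) cq(13) U(4)] .
    moreover have "ap s \<noteq> ?t" using n anc_refl U by metis
    ultimately have "{ap s, par (ap s)} \<in> Pl E uq" using Pl_upv uq by metis
    moreover have "{ap s, par (ap s)} \<in> Pl E us" using cs by blast
    ultimately show False using U_disj us uq usq by blast
  qed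
  have sV: "ap s \<in> V" using ap_V cs by blast
  have gV: "ap g \<in> V" using ap_V cs by blast
  have dgs: "dep (ap g) < dep (ap s)" using anc_strict_dep cs sV by blast
  have dst: "dep (ap s) \<le> dep ?t" using anc_dep_le st U by blast
  have g0: "Dlo uq g = n0u uq"
  proof (rule first_apex_above[OF uq(1) arcD(3)[OF aq]])
    show "\<not> (anc ?t (ap g) \<and> ?t \<noteq> ap g)"
    proof
      assume "anc ?t (ap g) \<and> ?t \<noteq> ap g"
      then have "dep ?t < dep (ap g)" using anc_strict_dep gV by blast
      then show False using dgs dst by simp
    qed
  qed
  have gFu: "g \<in> Fu uq" "q \<in> Fu uq" using cq by auto
  have cgq: "Dc uq g q" using arcD aq by blast
  show False
  proof (cases "anc (ap z) ?t")
    case True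
    have zl: "is_link z" using F_link zF by blast
    have zB: "z \<in> Bset E r F (ap s)" using zF asz unfolding Bset_def by blast
    have cov: "Pl E uq \<subseteq> (\<Union>l\<in>Bset E r F (ap s). Pl E l)"
    proof
      fix e assume "e \<in> Pl E uq"
      then obtain d where d: "dep ?t < d" "d \<le> dep ?b" "e = eb ?b d" using Pl_up[OF U(1-4)] by blast
      have dN: "d \<in> {n0u uq..n1u uq}" using d U by auto
      show "e \<in> (\<Union>l\<in>Bset E r F (ap s). Pl E l)"
      proof (cases "\<exists>x\<in>Fu uq. x \<noteq> g \<and> d \<in> Du uq x")
        case True
        then obtain x where x: "x \<in> Fu uq" "x \<noteq> g" "d \<in> Du uq x" by blast
        have "n0u uq < Dlo uq x" using ic.first_unique gFu x g0 by blast
        then have "anc ?t (ap x)" using ap_lo(3)[OF uq(1) x(1)] by blast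
        then have "anc (ap s) (ap x)" using anc_trans[OF st] ap_V Fu_F uq x by blast
        then have "x \<in> Bset E r F (ap s)" using Fu_F uq x unfolding Bset_def by blast
        moreover have "e \<in> Pl E x" using x d by (simp add: Du_def)
        ultimately show ?thesis by blast
      next
        case False
        then have "d \<in> DPv uq g" using dN unfolding ic.Pv_def by auto
        then have dl: "d < Dlo uq q" using ic.Pv_before cgq by blast
        note aq' = ap_lo[OF uq(1) gFu(2) cq(14)]
        have dt1: "1 \<le> dep ?t" using U by simp
        have d2: "2 \<le> d" using d dt1 by simp
        have "anc (ln ?b d) (ln ?b (Dlo uq q - 1))" using ln_anc[OF U(4)] d dl dt1 lo_facts(2)[OF uq(1) gFu(2)] by simp
        then have a1: "anc (ln ?b d) (ap q)" using aq' by simp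
        have "ln ?b (dep ?t) = ?t" using ln_of U by blast
        then have "anc ?t (ln ?b d)" using ln_anc[OF U(4) dt1, of d] d by simp
        then have a2: "anc (ap z) (ln ?b d)" using anc_trans[OF True] ln_props U d2 d by simp
        have inz: "ln ?b d \<in> Vl E z" using link_convex[OF zl apex_min(1)[OF zl] qz a2 a1] .
        have "dep (ap z) \<le> dep ?t" using anc_dep_le True U by blast
        moreover have "dep (ln ?b d) = d" using ln_props U d d2 by simp
        ultimately have "ln ?b d \<noteq> ap z" using d by auto
        then have "e \<in> Pl E z" using D_char[OF zl U(4) d2 d(2)] inz d by simp
        then show ?thesis using zB by blast
      qed
    qed
    have "dep (ap s) \<le> dep (v_of E r F uq)" using vof(3)[OF uq(1) st cov] .
    moreover have "anc (v_of E r F uq) (ap g)" using Fu_props(1)[OF uq(1)] gFu unfolding Bset_def by blast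
    then have "dep (v_of E r F uq) \<le> dep (ap g)" using anc_dep_le gV by blast
    ultimately show False using dgs by simp
  next
    case False
    have zV: "ap z \<in> V" using ap_V zF by blast
    have tz: "anc ?t (ap z)" "?t \<noteq> ap z" using anc_lin[OF cq(11) zq qV] False anc_refl zV by metis+
    have zs: "z \<noteq> s" using tz st False by blast
    then have "(s,z) \<in> R\<^sup>+" using sz by (metis rtranclD)
    then obtain w where sw: "(s,w) \<in> R\<^sup>*" and wz: "(w,z) \<in> R" by (meson tranclD2)
    obtain uz where az: "(uz, w, z) \<in> arcs" using wz unfolding R_def by blast
    have uz: "uz \<in> Lup" "uz \<in> U" using arcD az by auto
    have "{ap z, par (ap z)} \<in> Pl E uz" using consec_facts(10)[OF uz(1) arcD(3)[OF az]] .
    moreover have "{ap z, par (ap z)} \<in> Pl E uq"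
      using Pl_upv[OF uq(1) tz(1) anc_trans[OF zq cq(13) U(4)]] tz(2) by metis
    ultimately have "uz = uq" using U_disj uz uq by blast
    then have cwz: "Dc uq w z" using arcD az by blast
    have zFu: "z \<in> Fu uq" using consec_facts(2)[OF uq(1) cwz] .
    have zg: "z \<noteq> g"
    proof
      assume "z = g"
      then have "dep (ap s) \<le> dep (ap g)" using Rs[OF sz sF] by simp
      then show False using dgs by simp
    qed
    have zq': "z \<noteq> q"
    proof
      assume "z = q"
      then have "(uz, w, q) \<in> arcs" using az by simp
      then have "w = g" using pred_u(2)[OF _ aq] by blast
      then have "dep (ap s) \<le> dep (ap g)" using Rs[OF sw sF] by simp
      then show False using dgs by simp
    qed
    have "Dlo uq q < Dlo uq z" using ic.after_first[OF cgq g0 zFu zg zq'] .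
    moreover have "dep (ap z) = Dlo uq z - 1" using ap_lo(2)[OF uq(1) zFu] consec_facts(14)[OF uq(1) cwz] by blast
    moreover have "dep (ap q) = Dlo uq q - 1" using ap_lo(2)[OF uq(1) gFu(2) cq(14)] .
    moreover have "dep (ap z) \<le> dep (ap q)" using anc_dep_le zq qV by blast
    moreover have "n0u uq < Dlo uq q" using cq by blast
    ultimately show False by simp
  qed
qed

end


context setting begin

lemma cross:
  assumes xz: "(x,z) \<in> R\<^sup>*" and xF: "x \<in> F" and xv: "anc (ap x) v" and vz: "anc v (ap z)" "v \<noteq> ap z"
  shows "\<exists>p q. (x,p) \<in> R\<^sup>* \<and> (p,q) \<in> R \<and> (q,z) \<in> R\<^sup>* \<and> anc (ap p) v \<and> anc v (ap q) \<and> v \<noteq> ap q"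
  using xz vz
proof (induction arbitrary: rule: rtrancl_induct)
  case base
  have "ap x \<in> V" using ap_V xF by blast
  then show ?case using anc_antisym[OF base(1) xv] base(2) by blast
next
  case (step y z)
  have yF: "y \<in> F" using Rs(1)[OF step(1) xF] .
  note rf = R_facts[OF step(2)]
  have zV: "ap z \<in> V" using ap_V rf by blast
  show ?case
  proof (cases "anc v (ap y) \<and> v \<noteq> ap y")
    case True
    then obtain p q where "(x,p) \<in> R\<^sup>*" "(p,q) \<in> R" "(q,y) \<in> R\<^sup>*" "anc (ap p) v" "anc v (ap q)" "v \<noteq> ap q"
      using step.IH by blast
    then show ?thesis using step(2) by (meson rtrancl.rtrancl_into_rtrancl)
  next
    case False
    have "anc (ap y) v"
    proof (cases "anc v (ap y)")
      case True then have "v = ap y" using False by blast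
      then show ?thesis using anc_refl ap_V yF by simp
    next
      case False then show ?thesis using anc_lin[OF rf(4) step.prems(1) zV] by blast
    qed
    then show ?thesis using step(1,2) step.prems by blast
  qed
qed

lemma partA:
  assumes rF: "rt \<in> F" and rm: "(rt, m) \<in> R\<^sup>*"
  shows "\<forall>l'. (rt, l') \<in> R\<^sup>* \<longrightarrow> l' \<noteq> m \<longrightarrow> ap m \<in> Vl E l' \<longrightarrow> (l', m) \<in> R\<^sup>+"
  using rm
proof (induction rule: rtrancl_induct)
  case base
  show ?case
  proof (intro allI impI)
    fix l' assume a: "(rt, l') \<in> R\<^sup>*" "l' \<noteq> rt" "ap rt \<in> Vl E l'"
    have "(rt, l') \<in> R\<^sup>+" using rtranclD[OF a(1)] a(2) by auto
    then have "dep (ap rt) < dep (ap l')" using Rp by blast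
    moreover have lF: "l' \<in> F" using Rs a rF by blast
    then have "anc (ap l') (ap rt)" using apex_anc F_link a by blast
    then have "dep (ap l') \<le> dep (ap rt)" using anc_dep_le ap_V rF by blast
    ultimately show "(l', rt) \<in> R\<^sup>+" by simp
  qed
next
  case (step p m)
  note IH = step.IH
  note pm = R_facts[OF step(2)]
  show ?case
  proof (intro allI impI)
    fix l' assume a: "(rt, l') \<in> R\<^sup>*" "l' \<noteq> m" "ap m \<in> Vl E l'"
    have lF: "l' \<in> F" using Rs a rF by blast
    have ll: "is_link l'" using F_link lF by blast
    have mV: "ap m \<in> V" using ap_V pm by blast
    have pV: "ap p \<in> V" using ap_V pm by blast
    have lV: "ap l' \<in> V" using ap_V lF by blast
    have lm: "anc (ap l') (ap m)" using apex_anc ll a by blast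
    show "(l', m) \<in> R\<^sup>+"
    proof (cases "anc (ap l') (ap p)")
      case True
      have "ap p \<in> Vl E l'" using link_convex[OF ll apex_min(1)[OF ll] a(3) True pm(4)] .
      then have "l' = p \<or> (l', p) \<in> R\<^sup>+" using IH a(1) by blast
      then show ?thesis using step(2) by (meson trancl.r_into_trancl trancl.trancl_into_trancl)
    next
      case False
      have pl: "anc (ap p) (ap l')" "ap p \<noteq> ap l'"
        using anc_lin[OF lm pm(4) mV] False anc_refl lV by metis+
      have rp: "anc (ap rt) (ap p)" using Rs step(1) rF by blast
      obtain p' q where pq: "(rt,p') \<in> R\<^sup>*" "(p',q) \<in> R" "(q,l') \<in> R\<^sup>*" "anc (ap p') (ap p)"
        "anc (ap p) (ap q)" "ap p \<noteq> ap q"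
        using cross[OF a(1) rF rp pl] by blast
      note pqf = R_facts[OF pq(2)]
      have p'l: "is_link p'" using F_link pqf by blast
      have "ap p \<in> Vl E p'" using link_convex[OF p'l apex_min(1)[OF p'l] pqf(3) pq(4,5)] .
      then have pp: "p' = p \<or> (p', p) \<in> R\<^sup>+" using IH pq(1) by blast
      have qF: "q \<in> F" using pqf by blast
      have ql: "anc (ap q) (ap l')" using Rs pq(3) qF by blast
      have qm: "anc (ap q) (ap m)" using anc_trans[OF ql lm mV] .
      have qV: "ap q \<in> V" using ap_V qF by blast
      have dpq: "dep (ap p) < dep (ap q)" using anc_strict_dep pq(5,6) qV by blast
      obtain um where am: "(um, p, m) \<in> arcs" using step(2) unfolding R_def by blast
      show ?thesis
      proof (cases "p' = p")
        case True
        obtain uq where aq: "(uq, p, q) \<in> arcs" using pq(2) True unfolding R_def by blast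
        have qm': "q \<noteq> m"
        proof
          assume "q = m"
          then have "(m, l') \<in> R\<^sup>*" using pq(3) by simp
          then have "(m, l') \<in> R\<^sup>+" using rtranclD[of m l' R] a(2) by auto
          then have "dep (ap m) < dep (ap l')" using Rp by blast
          moreover have "dep (ap l') \<le> dep (ap m)" using anc_dep_le lm mV by blast
          ultimately show False by simp
        qed
        have "ap q \<noteq> ap m"
        proof
          assume e: "ap q = ap m"
          have u: "uq \<noteq> um" using succ_u[OF aq am qm'] .
          have i1: "{ap q, par (ap q)} \<in> Pl E uq" using consec_facts(10)[OF arcD(2,3)[OF aq]] .
          have i2: "{ap m, par (ap m)} \<in> Pl E um" using consec_facts(10)[OF arcD(2,3)[OF am]] .
          have dj: "Pl E uq \<inter> Pl E um = {}" using U_disj arcD(1)[OF aq] arcD(1)[OF am] u by blast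
          show False using i1 i2 dj e by auto
        qed
        then show ?thesis using final[OF aq am qm' qm _ pq(3) lm a(3)] by blast
      next
        case False
        then have "(p', p) \<in> R\<^sup>+" using pp by blast
        then obtain s where ps: "(p', s) \<in> R" "(s, p) \<in> R\<^sup>*" by (meson tranclD)
        obtain us where as: "(us, p', s) \<in> arcs" using ps(1) unfolding R_def by blast
        obtain uq where aq: "(uq, p', q) \<in> arcs" using pq(2) unfolding R_def by blast
        have sF: "s \<in> F" using R_facts ps by blast
        have sp: "anc (ap s) (ap p)" "dep (ap s) \<le> dep (ap p)" using Rs ps(2) sF by auto
        have sq: "s \<noteq> q"
        proof
          assume "s = q"
          then have "dep (ap q) \<le> dep (ap p)" using sp by simp
          then show False using dpq by simp
        qed
        have sq2: "anc (ap s) (ap q)" using anc_trans[OF sp(1) pq(5) qV] .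
        have sq3: "ap s \<noteq> ap q" using sp dpq by auto
        have "ap q \<in> Vl E p"
        proof -
          have pl2: "is_link p" using F_link pm by blast
          show ?thesis using link_convex[OF pl2 apex_min(1)[OF pl2] pm(3) pq(5) qm] .
        qed
        then show ?thesis using final[OF as aq sq sq2 sq3 ps(2) pq(5)] by blast
      qed
    qed
  qed
qed

lemma partB:
  assumes a1: "(u, x1, y1) \<in> arcs" and a2: "(u, x2, y2) \<in> arcs" and ne: "x1 \<noteq> x2"
    and yx: "(y1, x2) \<in> R\<^sup>*" and yl: "(y2, l) \<in> R\<^sup>*" and lx: "ap l \<in> Vl E x1"
  shows False
proof -
  have u: "u \<in> Lup" using arcD a1 by blast
  interpret ic: icover "n0u u" "n1u u" "Fu u" "Du u" using icov[OF u] .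
  note U = upF[OF u]
  have c1: "Dc u x1 y1" and c2: "Dc u x2 y2" using arcD a1 a2 by auto
  note f1 = consec_facts[OF u c1] and f2 = consec_facts[OF u c2]
  have d1: "dep (ap x1) < dep (ap y1)" using R_facts a1 unfolding R_def by blast
  have d2: "dep (ap y1) \<le> dep (ap x2)" using Rs yx f1 by blast
  have lo12: "Dlo u x1 < Dlo u x2"
  proof (rule ccontr)
    assume "\<not> Dlo u x1 < Dlo u x2"
    then have lt: "Dlo u x2 < Dlo u x1" using ic.lo_neq f1 f2 ne by fastforce
    have n2: "n0u u \<le> Dlo u x2" using ic.D_eq f2 by blast
    then have g1: "n0u u < Dlo u x1" using lt by simp
    have e1: "dep (ap x1) = Dlo u x1 - 1" using ap_lo(2)[OF u f1(1) g1] .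
    show False
    proof (cases "n0u u < Dlo u x2")
      case True
      have "dep (ap x2) = Dlo u x2 - 1" using ap_lo(2)[OF u f2(1) True] .
      then show False using e1 d1 d2 lt by simp
    next
      case False
      then have "Dlo u x2 = n0u u" using n2 by simp
      then have "anc (ap x2) (tu u)" using ap_first[OF u f2(1)] by blast
      then have "dep (ap x2) \<le> dep (tu u)" using anc_dep_le U by blast
      then show False using e1 d1 d2 g1 U by simp
    qed
  qed
  have p12: "Dp u x1 x2" using ic.precv_lo f1 f2 lo12 by blast
  have p2: "Dp u x2 y2" using c2 unfolding ic.consec_def by blast
  have gap: "Suc (Dhi u x1) < Dlo u y2" using ic.between_gap[OF f1(1) f2(2) f2(1) p12 p2] .
  have x1l: "is_link x1" using F_link f1 by blast
  have hiD: "Dhi u x1 \<in> Du u x1" using ic.D_eq[OF f1(1)] by auto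
  then have hr: "n0u u \<le> Dhi u x1" "Dhi u x1 \<le> n1u u" by (auto simp: Du_def)
  have dt1: "1 \<le> dep (tu u)" using U by simp
  let ?b = "bu u" and ?d = "Suc (Dhi u x1)"
  have h2: "2 \<le> Dhi u x1" using hr U dt1 by simp
  have lo2: "Dlo u y2 \<le> dep ?b" using lo_facts(2)[OF u f2(2)] .
  have inh: "ln ?b (Dhi u x1) \<in> Vl E x1" using hiD D_char[OF x1l U(4) h2] hr U by (simp add: Du_def)
  have ay2: "ap y2 = ln ?b (Dlo u y2 - 1)" using ap_lo(1)[OF u f2(2) f2(14)] .
  have "anc (ln ?b ?d) (ln ?b (Dlo u y2 - 1))" using ln_anc[OF U(4)] gap lo2 h2 by simp
  moreover have lF: "l \<in> F" using Rs(1)[OF yl] f2 by blast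
  moreover have "anc (ap y2) (ap l)" using Rs(2)[OF yl] f2 by blast
  ultimately have a_dl: "anc (ln ?b ?d) (ap l)" using ay2 anc_trans ap_V by metis
  have a_hd: "anc (ln ?b (Dhi u x1)) (ln ?b ?d)" using ln_anc[OF U(4)] gap lo2 h2 by simp
  have ind: "ln ?b ?d \<in> Vl E x1" using link_convex[OF x1l inh lx a_hd a_dl] .
  have "anc (ap x1) (ln ?b (Dhi u x1))" using apex_anc x1l inh by blast
  then have "dep (ap x1) \<le> Dhi u x1" using anc_dep_le ln_props[OF U(4)] h2 hr U
    by (metis one_le_numeral order_trans)
  moreover have "dep (ln ?b ?d) = ?d" using ln_props[OF U(4)] gap lo2 by simp
  ultimately have "ln ?b ?d \<noteq> ap x1" by auto
  then have "eb ?b ?d \<in> Pl E x1" using D_char[OF x1l U(4)] ind gap lo2 h2 by simp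
  then have "?d \<in> Du u x1" using gap lo2 hr U by (simp add: Du_def)
  then show False using ic.D_eq[OF f1(1)] by auto
qed

end


context setting begin

definition Sym where "Sym = {(arc_tail a, arc_head a) | a. a \<in> arcs} \<union> {(arc_head a, arc_tail a) | a. a \<in> arcs}"

lemma arc_R: "a \<in> arcs \<Longrightarrow> (arc_tail a, arc_head a) \<in> R"
  unfolding R_def arc_tail_def arc_head_def by (cases a) auto

lemma Sym_R: "(x,y) \<in> Sym \<longleftrightarrow> (x,y) \<in> R \<or> (y,x) \<in> R"
proof
  assume "(x,y) \<in> Sym"
  then show "(x,y) \<in> R \<or> (y,x) \<in> R" unfolding Sym_def using arc_R by auto
next
  assume "(x,y) \<in> R \<or> (y,x) \<in> R"
  then show "(x,y) \<in> Sym"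
  proof
    assume "(x,y) \<in> R"
    then obtain u where "(u,x,y) \<in> arcs" unfolding R_def by blast
    then show ?thesis unfolding Sym_def arc_tail_def arc_head_def by force
  next
    assume "(y,x) \<in> R"
    then obtain u where "(u,y,x) \<in> arcs" unfolding R_def by blast
    then show ?thesis unfolding Sym_def arc_tail_def arc_head_def by force
  qed
qed

lemma Sym_conv: "Sym\<inverse> = Sym"
  using Sym_R by auto

lemma Sym_sym: "(x,y) \<in> Sym\<^sup>* \<Longrightarrow> (y,x) \<in> Sym\<^sup>*"
  by (metis Sym_conv rtrancl_converseI)

lemma comp_root:
  assumes comp: "weak_component F arcs C" and root: "is_root C (comp_arcs arcs C) rt"
  shows "C \<subseteq> F" "rt \<in> F" "\<And>x. x \<in> C \<Longrightarrow> (rt, x) \<in> R\<^sup>*"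
proof -
  obtain x0 where x0: "x0 \<in> F" "C = {y. (x0, y) \<in> Sym\<^sup>*}"
    using comp unfolding weak_component_def Sym_def by blast
  have SF: "(x0, y) \<in> Sym\<^sup>* \<Longrightarrow> y \<in> F" for y
  proof (induction rule: rtrancl_induct)
    case base then show ?case using x0 by simp
  next
    case (step y z) then show ?case using Sym_R R_facts by blast
  qed
  show CF: "C \<subseteq> F" using SF x0 by blast
  have rC: "rt \<in> C" using root unfolding is_root_def by blast
  then show "rt \<in> F" using CF by blast
  have nohead: "\<And>a. a \<in> comp_arcs arcs C \<Longrightarrow> arc_head a \<noteq> rt" using root unfolding is_root_def by blast
  have x0r: "(x0, rt) \<in> Sym\<^sup>*" using rC x0 by blast
  have main: "(rt, y) \<in> Sym\<^sup>* \<Longrightarrow> (rt, y) \<in> R\<^sup>*" for y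
  proof (induction rule: rtrancl_induct)
    case base then show ?case by simp
  next
    case (step y z)
    show ?case
    proof (cases "(y,z) \<in> R")
      case True then show ?thesis using step.IH by simp
    next
      case False
      then have zy: "(z,y) \<in> R" using Sym_R step(2) by blast
      show ?thesis
      proof (cases "y = rt")
        case True
        obtain u where a: "(u,z,y) \<in> arcs" using zy unfolding R_def by blast
        have "(rt, z) \<in> Sym" using Sym_R zy True by blast
        then have "z \<in> C" using x0 x0r by (meson rtrancl.rtrancl_into_rtrancl mem_Collect_eq)
        then have "(u,z,y) \<in> comp_arcs arcs C" using a rC True unfolding comp_arcs_def arc_tail_def arc_head_def by simp
        then show ?thesis using nohead True unfolding arc_head_def by fastforce
      next
        case False
        then have "(rt, y) \<in> R\<^sup>+" using step.IH rtranclD by metis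
        then obtain w where "(rt, w) \<in> R\<^sup>*" "(w, y) \<in> R" by (meson tranclD2)
        moreover then have "w = z" using R_pred zy by blast
        ultimately show ?thesis by simp
      qed
    qed
  qed
  fix x assume "x \<in> C"
  then have "(x0, x) \<in> Sym\<^sup>*" using x0 by blast
  then have "(rt, x) \<in> Sym\<^sup>*" using Sym_sym[OF x0r] by (meson rtrancl_trans)
  then show "(rt, x) \<in> R\<^sup>*" using main by blast
qed

definition hv where "hv rt H k = (if k = 0 then rt else arc_head (H ! (k - 1)))"

lemma H_facts:
  assumes H: "dir_path (comp_arcs arcs C) rt l H"
  shows "\<And>k. k < length H \<Longrightarrow> H ! k \<in> arcs \<and> arc_tail (H ! k) = hv rt H k \<and> arc_head (H ! k) = hv rt H (Suc k)"
    "hv rt H (length H) = l"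
    "\<And>i j. i \<le> length H \<Longrightarrow> j \<le> length H \<Longrightarrow> hv rt H i = hv rt H j \<Longrightarrow> i = j"
proof -
  have sH: "set H \<subseteq> arcs" using H unfolding dir_path_def comp_arcs_def by auto
  have dist: "distinct (rt # map arc_head H)" using H unfolding dir_path_def by blast
  show "H ! k \<in> arcs \<and> arc_tail (H ! k) = hv rt H k \<and> arc_head (H ! k) = hv rt H (Suc k)" if k: "k < length H" for k
  proof -
    have ne: "H \<noteq> []" using k by auto
    have d: "arc_tail (hd H) = rt" "\<forall>i. Suc i < length H \<longrightarrow> arc_head (H ! i) = arc_tail (H ! Suc i)"
      using H ne unfolding dir_path_def by auto
    have "arc_tail (H ! k) = hv rt H k"
    proof (cases k)
      case 0 then show ?thesis using d ne by (simp add: hv_def hd_conv_nth)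
    next
      case (Suc k') then show ?thesis using d k by (simp add: hv_def)
    qed
    moreover have "H ! k \<in> arcs" using sH k nth_mem by blast
    ultimately show ?thesis by (simp add: hv_def)
  qed
  show "hv rt H (length H) = l"
  proof (cases "H = []")
    case True then show ?thesis using H unfolding dir_path_def by (simp add: hv_def)
  next
    case False
    then have "arc_head (last H) = l" using H unfolding dir_path_def by auto
    then show ?thesis using False by (simp add: hv_def last_conv_nth)
  qed
  have nth: "(rt # map arc_head H) ! k = hv rt H k" if "k \<le> length H" for k
    using that by (cases k) (auto simp: hv_def)
  show "i = j" if "i \<le> length H" "j \<le> length H" "hv rt H i = hv rt H j" for i j
    using nth_eq_iff_index_eq[OF dist, of i j] that nth by simp
qed

lemma H_R: assumes H: "dir_path (comp_arcs arcs C) rt l H" and k: "k < length H"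
  shows "(hv rt H k, hv rt H (Suc k)) \<in> R"
  using H_facts(1)[OF H k] arc_R by metis

lemma H_star: assumes H: "dir_path (comp_arcs arcs C) rt l H"
  shows "k \<le> m \<Longrightarrow> m \<le> length H \<Longrightarrow> (hv rt H k, hv rt H m) \<in> R\<^sup>*"
proof (induction m)
  case 0 then show ?case by simp
next
  case (Suc m)
  show ?case
  proof (cases "k = Suc m")
    case True then show ?thesis by simp
  next
    case False
    then have "(hv rt H k, hv rt H m) \<in> R\<^sup>*" using Suc by simp
    moreover have "(hv rt H m, hv rt H (Suc m)) \<in> R" using H_R[OF H] Suc by simp
    ultimately show ?thesis by simp
  qed
qed

lemma H_pre: assumes H: "dir_path (comp_arcs arcs C) rt l H" and rF: "rt \<in> F"
  shows "k \<le> length H \<Longrightarrow> (l', hv rt H k) \<in> R\<^sup>+ \<Longrightarrow> (rt, l') \<in> R\<^sup>* \<Longrightarrow> \<exists>i<k. hv rt H i = l'"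
proof (induction k)
  case 0
  then have "(rt, rt) \<in> R\<^sup>+" by (simp add: hv_def)
  then show ?case using Rp_neq by blast
next
  case (Suc k)
  obtain w where w: "(l', w) \<in> R\<^sup>*" "(w, hv rt H (Suc k)) \<in> R" using Suc.prems(2) by (meson tranclD2)
  have "(hv rt H k, hv rt H (Suc k)) \<in> R" using H_R[OF H] Suc.prems by simp
  then have wk: "w = hv rt H k" using R_pred w by blast
  show ?case
  proof (cases "l' = hv rt H k")
    case True then show ?thesis by auto
  next
    case False
    then have "(l', hv rt H k) \<in> R\<^sup>+" using w wk rtranclD by metis
    then show ?thesis using Suc by (metis less_SucI Suc_leD)
  qed
qed

lemma main:
  assumes comp: "weak_component F arcs C" and l_in: "l \<in> C"
    and root: "is_root C (comp_arcs arcs C) rt"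
    and H: "dir_path (comp_arcs arcs C) rt l H"
  shows "card {l' \<in> C - {l}. ap l \<in> Vl E l'}
           \<le> card {u \<in> U. \<exists>a\<in>set H. a \<in> (\<lambda>(x, y). (u, x, y)) ` A_u E r u (Fu u)}"
proof -
  note cr = comp_root[OF comp root]
  let ?LHS = "{l' \<in> C - {l}. ap l \<in> Vl E l'}"
  let ?RHS = "{u \<in> U. \<exists>a\<in>set H. a \<in> (\<lambda>(x, y). (u, x, y)) ` A_u E r u (Fu u)}"
  let ?h = "hv rt H"
  have rl: "(rt, l) \<in> R\<^sup>*" using cr l_in by blast
  have ex: "\<exists>i. i < length H \<and> ?h i = l'" if l': "l' \<in> ?LHS" for l'
  proof -
    have "(rt, l') \<in> R\<^sup>*" using cr l' by blast
    then have "(l', l) \<in> R\<^sup>+" using partA[OF cr(2) rl] l' by blast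
    then have "(l', ?h (length H)) \<in> R\<^sup>+" using H_facts(2)[OF H] by simp
    then show ?thesis using H_pre[OF H cr(2) order_refl] cr l' by blast
  qed
  define idx where "idx l' = (SOME i. i < length H \<and> ?h i = l')" for l'
  have idx: "idx l' < length H \<and> ?h (idx l') = l'" if "l' \<in> ?LHS" for l'
    unfolding idx_def using someI_ex[OF ex[OF that]] .
  define f where "f l' = fst (H ! idx l')" for l'
  have trip: "H ! k = (fst (H ! k), ?h k, ?h (Suc k))" if "k < length H" for k
    using H_facts(1)[OF H that] unfolding arc_tail_def arc_head_def by (cases "H ! k") auto
  have inj_aux: False if ij: "i < j" "j < length H" "fst (H ! i) = fst (H ! j)" "ap l \<in> Vl E (?h i)" for i j
  proof -
    let ?u = "fst (H ! i)"
    have a1: "(?u, ?h i, ?h (Suc i)) \<in> arcs" using H_facts(1)[OF H] trip ij by (metis less_trans)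
    have a2: "(?u, ?h j, ?h (Suc j)) \<in> arcs" using H_facts(1)[OF H] trip ij by metis
    have ne: "?h i \<noteq> ?h j" using H_facts(3)[OF H, of i j] ij by fastforce
    have "(?h (Suc i), ?h j) \<in> R\<^sup>*" using H_star[OF H] ij by simp
    moreover have "(?h (Suc j), l) \<in> R\<^sup>*" using H_star[OF H, of "Suc j" "length H"] ij H_facts(2)[OF H] by simp
    ultimately show False using partB[OF a1 a2 ne] ij by blast
  qed
  have inj: "inj_on f ?LHS"
  proof (rule inj_onI)
    fix l1 l2 assume l: "l1 \<in> ?LHS" "l2 \<in> ?LHS" "f l1 = f l2"
    note i1 = idx[OF l(1)] and i2 = idx[OF l(2)]
    show "l1 = l2"
    proof (cases "idx l1 = idx l2")
      case True then show ?thesis using i1 i2 by metis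
    next
      case False
      show ?thesis
      proof (cases "idx l1 < idx l2")
        case True
        have "ap l \<in> Vl E (?h (idx l1))" using i1 l by simp
        then show ?thesis using inj_aux[OF True] i1 i2 l(3) unfolding f_def by blast
      next
        case False
        then have lt: "idx l2 < idx l1" using \<open>idx l1 \<noteq> idx l2\<close> by simp
        have "ap l \<in> Vl E (?h (idx l2))" using i2 l by simp
        then show ?thesis using inj_aux[OF lt] i1 i2 l(3) unfolding f_def by metis
      qed
    qed
  qed
  have img: "f ` ?LHS \<subseteq> ?RHS"
  proof
    fix u assume "u \<in> f ` ?LHS"
    then obtain l' where l': "l' \<in> ?LHS" "u = f l'" by blast
    let ?k = "idx l'"
    have k: "?k < length H" using idx l' by blast
    have a: "H ! ?k \<in> arcs" using H_facts(1)[OF H k] by blast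
    then obtain u' x y where uxy: "H ! ?k = (u', x, y)" "u' \<in> U" "(x,y) \<in> A_u E r u' (Fu u')"
      unfolding dep_arcs_def by blast
    have "u' = u" using uxy l' unfolding f_def by simp
    moreover have "H ! ?k \<in> set H" using k by simp
    ultimately show "u \<in> ?RHS" using uxy by force
  qed
  have fin: "finite ?RHS" using finU by simp
  show ?thesis using card_inj_on_le[OF inj img fin] .
qed

end

theorem lemma13:
  fixes V :: "'v set" and E L F U :: "'v set set" and w :: "'v set \<Rightarrow> real" and r :: 'v
    and Fu :: "'v set \<Rightarrow> 'v set set" and C :: "'v set set" and l :: "'v set"
    and root :: "'v set" and H :: "('v set \<times> 'v set \<times> 'v set) list"
  assumes tree: "is_tree V E"
    and links: "L \<subseteq> {{a, b} | a b. a \<in> V \<and> b \<in> V \<and> a \<noteq> b}"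
    and weights: "\<forall>x\<in>L. w x > 0"
    and root_in: "r \<in> V"
    and F_sub: "F \<subseteq> L"
    and F_sol: "(\<Union>x\<in>F. Pl E x) = E"
    and U_sub: "U \<subseteq> L_up E r L"
    and U_disj: "\<forall>u1\<in>U. \<forall>u2\<in>U. u1 \<noteq> u2 \<longrightarrow> Pl E u1 \<inter> Pl E u2 = {}"
    and Fu_choice: "\<forall>u\<in>L_up E r L. Fu_ok E r F u (Fu u)"
    and comp: "weak_component F (dep_arcs E r Fu U) C"
    and l_in: "l \<in> C"
    and root: "is_root C (comp_arcs (dep_arcs E r Fu U) C) root"
    and H: "dir_path (comp_arcs (dep_arcs E r Fu U) C) root l H"
  shows "card {l' \<in> C - {l}. apex E r l \<in> Vl E l'}
           \<le> card {u \<in> U. \<exists>a\<in>set H. a \<in> (\<lambda>(x, y). (u, x, y)) ` A_u E r u (Fu u)}"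
proof -
  interpret setting V E r L F U Fu
    by (unfold_locales) (use tree root_in links F_sub F_sol U_sub U_disj Fu_choice in auto)
  show ?thesis using main[OF comp l_in root H] .
qed


end
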